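(* Let $M$ be a mode for a program $P$ such that $P$ is safe w.r.t. $M$ and $P$ satisfies $M$. Let $\mathit{Eqs}$ be a conjunction of equations and $G_0,G_1,G_2$ be goals, where no disequation occurs in $G_1$ and all derivations from the goal $(G_0,G_1)$ using $P$ are consistent with $M$. Then: (i) $(G_0,G_1,\mathit{Eqs},G_2)\longmapsto^*_P\mathit{true}$ iff $(G_0,\mathit{Eqs},G_1,G_2)\longmapsto^*_P\mathit{true}$; (ii) $\mu(P,(G_0,G_1,\mathit{Eqs},G_2))=\mu(P,(G_0,\mathit{Eqs},G_1,G_2))$; (iii) $\nu(P,(G_0,G_1,\mathit{Eqs},G_2))=\nu(P,(G_0,\mathit{Eqs},G_1,G_2))$.
   Context: Predicate symbols $\mathit{true}$, $=$, $\neq$ are basic, all others non-basic. Basic atoms: $\mathit{true}$, $t_1=t_2$ (equation), $t_1\neq t_2$ (disequation); non-basic atoms $p(t_1,\dots,t_m)$, $p$ non-basic. A goal is a conjunction of atoms ("," associative, neutral element $\mathit{true}$). A clause $C$ is $A\leftarrow G$ with non-basic head $hd(C)$ and body $bd(C)$; a program is a set of clauses. All mgu's are relevant and idempotent. A variable $X$ is a local variable of goal $G$ in clause $H\leftarrow G_1,G,G_2$ iff $X\in vars(G)-vars(H,G_1,G_2)$. Operational semantics: (1) $(t_1=t_2,G)\longmapsto_P G\vartheta$ if $t_1,t_2$ unify with mgu $\vartheta$; (2) $(t_1\neq t_2,G)\longmapsto_P G$ if not unifiable; (3) $(A,G)\longmapsto_P(bd(C),G)\vartheta$ if $A$ is non-basic,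 $C$ a renamed apart clause of $P$ and $\vartheta$ an mgu of $A$ and $hd(C)$. A derivation is $G_0\longmapsto_P\cdots\longmapsto_P G_z$, of length $z$; successful if $G_z=\mathit{true}$ (then $G_0$ succeeds). $\longmapsto^*_P$ is the reflexive-transitive closure. For a derivation $\delta$, $\lambda(\delta)$ is the number of goals $G_i$ in $\delta$ of the form $(A,K)$ with $A$ non-basic. $\mu(P,G)$ is the minimum of $\lambda(\delta)$ over successful derivations $\delta$ of $G$ in $P$, and $\infty$ if $G$ does not succeed; $\nu(P,G)$ is the minimum length of a successful derivation of $G$ in $P$, and $\infty$ if none. Modes: a mode for non-basic $p$ of arity $h$ is $p(m_1,\dots,m_h)$, $m_i\in\{+,?\}$; $t_i$ is an input argument iff $m_i=+$; variables in input arguments are input variables; a mode for a program contains exactly one mode per non-basic predicate occurring in it. An atom satisfies $M$ iff $M$ has a mode for its predicate and its input arguments are ground. $P$ satisfies $M$ iff for every non-basic $A_0$ satisfying $M$ and every non-basic $A$ and goal $G$ with $A_0\longmapsto^*_P(A,G)$, $A$ satisfies $M$. A derivation $G_0\longmapsto_P\cdots\longmapsto_P G_n$ is consistent with $M$ iff for $i<n$, whenever the leftmost atom of $G_i$ is a non-basic atom $A$, $A$ satisfies $M$. A clause $C$ is safe w.r.t. $M$ iff each variable of each disequation $t_1\neq t_2$ in $bd(C)$ is an input variable of $hd(C)$ or a local variable of $t_1\neq t_2$ in $C$; a program is safe iff all its clauses are. *)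

theory Defs
  imports Main "HOL-Library.Extended_Nat"
begin

datatype ('f, 'v) trm = Var 'v | Fn 'f "('f, 'v) trm list"

fun vars_trm :: "('f, 'v) trm \<Rightarrow> 'v set" where
  "vars_trm (Var x) = {x}"
| "vars_trm (Fn f ts) = (\<Union>t\<in>set ts. vars_trm t)"

definition ground :: "('f, 'v) trm \<Rightarrow> bool" where
  "ground t \<longleftrightarrow> vars_trm t = {}"

type_synonym ('f, 'v) subst = "'v \<Rightarrow> ('f, 'v) trm"

fun subst_trm :: "('f, 'v) subst \<Rightarrow> ('f, 'v) trm \<Rightarrow> ('f, 'v) trm" where
  "subst_trm \<sigma> (Var x) = \<sigma> x"
| "subst_trm \<sigma> (Fn f ts) = Fn f (map (subst_trm \<sigma>) ts)"

text \<open>Composition: first apply sigma, then tau.\<close>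
definition subst_comp :: "('f, 'v) subst \<Rightarrow> ('f, 'v) subst \<Rightarrow> ('f, 'v) subst" where
  "subst_comp \<sigma> \<tau> = (\<lambda>x. subst_trm \<tau> (\<sigma> x))"

definition sdom :: "('f, 'v) subst \<Rightarrow> 'v set" where
  "sdom \<sigma> = {x. \<sigma> x \<noteq> Var x}"

definition svran :: "('f, 'v) subst \<Rightarrow> 'v set" where
  "svran \<sigma> = (\<Union>x\<in>sdom \<sigma>. vars_trm (\<sigma> x))"

definition unifier :: "('f, 'v) subst \<Rightarrow> (('f, 'v) trm \<times> ('f, 'v) trm) set \<Rightarrow> bool" where
  "unifier \<sigma> E \<longleftrightarrow> (\<forall>(s, t)\<in>E. subst_trm \<sigma> s = subst_trm \<sigma> t)"

definition is_mgu :: "('f, 'v) subst \<Rightarrow> (('f, 'v) trm \<times> ('f, 'v) trm) set \<Rightarrow> bool" where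
  "is_mgu \<sigma> E \<longleftrightarrow> unifier \<sigma> E \<and> (\<forall>\<tau>. unifier \<tau> E \<longrightarrow> (\<exists>\<gamma>. \<tau> = subst_comp \<sigma> \<gamma>))"

definition relevant :: "('f, 'v) subst \<Rightarrow> (('f, 'v) trm \<times> ('f, 'v) trm) set \<Rightarrow> bool" where
  "relevant \<sigma> E \<longleftrightarrow> sdom \<sigma> \<union> svran \<sigma> \<subseteq> (\<Union>(s, t)\<in>E. vars_trm s \<union> vars_trm t)"

definition idempotent :: "('f, 'v) subst \<Rightarrow> bool" where
  "idempotent \<sigma> \<longleftrightarrow> subst_comp \<sigma> \<sigma> = \<sigma>"

definition good_mgu :: "('f, 'v) subst \<Rightarrow> (('f, 'v) trm \<times> ('f, 'v) trm) set \<Rightarrow> bool" where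
  "good_mgu \<sigma> E \<longleftrightarrow> is_mgu \<sigma> E \<and> relevant \<sigma> E \<and> idempotent \<sigma>"

text \<open>The basic atom true is the neutral element of goal conjunction; goals are
  represented as lists of atoms other than true (the empty list is the goal true).\<close>
datatype ('p, 'f, 'v) atom =
    Eq "('f, 'v) trm" "('f, 'v) trm"
  | Neq "('f, 'v) trm" "('f, 'v) trm"
  | Pred 'p "('f, 'v) trm list"

type_synonym ('p, 'f, 'v) goal = "('p, 'f, 'v) atom list"

fun is_eq :: "('p, 'f, 'v) atom \<Rightarrow> bool" where
  "is_eq (Eq _ _) = True" | "is_eq _ = False"

fun is_neq :: "('p, 'f, 'v) atom \<Rightarrow> bool" where
  "is_neq (Neq _ _) = True" | "is_neq _ = False"

fun nonbasic :: "('p, 'f, 'v) atom \<Rightarrow> bool" where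
  "nonbasic (Pred _ _) = True" | "nonbasic _ = False"

fun vars_atom :: "('p, 'f, 'v) atom \<Rightarrow> 'v set" where
  "vars_atom (Eq s t) = vars_trm s \<union> vars_trm t"
| "vars_atom (Neq s t) = vars_trm s \<union> vars_trm t"
| "vars_atom (Pred p ts) = (\<Union>t\<in>set ts. vars_trm t)"

definition vars_goal :: "('p, 'f, 'v) goal \<Rightarrow> 'v set" where
  "vars_goal G = (\<Union>a\<in>set G. vars_atom a)"

fun subst_atom :: "('f, 'v) subst \<Rightarrow> ('p, 'f, 'v) atom \<Rightarrow> ('p, 'f, 'v) atom" where
  "subst_atom \<sigma> (Eq s t) = Eq (subst_trm \<sigma> s) (subst_trm \<sigma> t)"
| "subst_atom \<sigma> (Neq s t) = Neq (subst_trm \<sigma> s) (subst_trm \<sigma> t)"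
| "subst_atom \<sigma> (Pred p ts) = Pred p (map (subst_trm \<sigma>) ts)"

definition subst_goal :: "('f, 'v) subst \<Rightarrow> ('p, 'f, 'v) goal \<Rightarrow> ('p, 'f, 'v) goal" where
  "subst_goal \<sigma> G = map (subst_atom \<sigma>) G"

datatype ('p, 'f, 'v) clause = Cl 'p "('f, 'v) trm list" "('p, 'f, 'v) goal"

fun hd_cl :: "('p, 'f, 'v) clause \<Rightarrow> ('p, 'f, 'v) atom" where
  "hd_cl (Cl p ts B) = Pred p ts"

fun bd_cl :: "('p, 'f, 'v) clause \<Rightarrow> ('p, 'f, 'v) goal" where
  "bd_cl (Cl p ts B) = B"

definition vars_clause :: "('p, 'f, 'v) clause \<Rightarrow> 'v set" where
  "vars_clause C = vars_atom (hd_cl C) \<union> vars_goal (bd_cl C)"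

fun rename_clause :: "('v \<Rightarrow> 'v) \<Rightarrow> ('p, 'f, 'v) clause \<Rightarrow> ('p, 'f, 'v) clause" where
  "rename_clause \<rho> (Cl p ts B) =
     Cl p (map (subst_trm (Var \<circ> \<rho>)) ts) (subst_goal (Var \<circ> \<rho>) B)"

type_synonym ('p, 'f, 'v) program = "('p, 'f, 'v) clause set"

inductive step :: "('p, 'f, 'v) program \<Rightarrow> ('p, 'f, 'v) goal \<Rightarrow> ('p, 'f, 'v) goal \<Rightarrow> bool"
  for P where
  step_eq: "good_mgu \<theta> {(t1, t2)} \<Longrightarrow> step P (Eq t1 t2 # G) (subst_goal \<theta> G)"
| step_neq: "\<not> (\<exists>\<sigma>. subst_trm \<sigma> t1 = subst_trm \<sigma> t2) \<Longrightarrow> step P (Neq t1 t2 # G) G"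
| step_res: "\<lbrakk> C0 \<in> P; bij \<rho>; rename_clause \<rho> C0 = Cl q us B;
              vars_clause (Cl q us B) \<inter> vars_goal (Pred p ts # G) = {};
              q = p; length ts = length us; good_mgu \<theta> (set (zip ts us)) \<rbrakk>
             \<Longrightarrow> step P (Pred p ts # G) (subst_goal \<theta> (B @ G))"

abbreviation steps :: "('p, 'f, 'v) program \<Rightarrow> ('p, 'f, 'v) goal \<Rightarrow> ('p, 'f, 'v) goal \<Rightarrow> bool" where
  "steps P \<equiv> (step P)\<^sup>*\<^sup>*"

text \<open>A derivation G_0 -> ... -> G_z is the nonempty list [G_0, ..., G_z]; its length is z.\<close>
definition derivation :: "('p, 'f, 'v) program \<Rightarrow> ('p, 'f, 'v) goal list \<Rightarrow> bool" where
  "derivation P ds \<longleftrightarrow> ds \<noteq> [] \<and> (\<forall>i. Suc i < length ds \<longrightarrow> step P (ds ! i) (ds ! Suc i))"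

definition successful_deriv :: "('p, 'f, 'v) program \<Rightarrow> ('p, 'f, 'v) goal \<Rightarrow> ('p, 'f, 'v) goal list \<Rightarrow> bool" where
  "successful_deriv P G ds \<longleftrightarrow> derivation P ds \<and> hd ds = G \<and> last ds = []"

fun leftmost_nonbasic :: "('p, 'f, 'v) goal \<Rightarrow> bool" where
  "leftmost_nonbasic [] = False"
| "leftmost_nonbasic (A # K) = nonbasic A"

definition lam :: "('p, 'f, 'v) goal list \<Rightarrow> nat" where
  "lam ds = card {i. i < length ds \<and> leftmost_nonbasic (ds ! i)}"

definition mu :: "('p, 'f, 'v) program \<Rightarrow> ('p, 'f, 'v) goal \<Rightarrow> enat" where
  "mu P G = (INF ds \<in> {ds. successful_deriv P G ds}. enat (lam ds))"

definition nu :: "('p, 'f, 'v) program \<Rightarrow> ('p, 'f, 'v) goal \<Rightarrow> enat" where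
  "nu P G = (INF ds \<in> {ds. successful_deriv P G ds}. enat (length ds - 1))"

text \<open>A mode assigns to a predicate symbol a list of flags (True = +, False = ?).\<close>
type_synonym 'p mode = "'p \<Rightarrow> bool list option"

fun sat_atom :: "'p mode \<Rightarrow> ('p, 'f, 'v) atom \<Rightarrow> bool" where
  "sat_atom M (Pred p ts) =
     (case M p of
        Some ms \<Rightarrow> length ms = length ts \<and> (\<forall>i<length ts. ms ! i \<longrightarrow> ground (ts ! i))
      | None \<Rightarrow> False)"
| "sat_atom M _ = False"

definition atoms_of_prog :: "('p, 'f, 'v) program \<Rightarrow> ('p, 'f, 'v) atom set" where
  "atoms_of_prog P = (\<Union>C\<in>P. insert (hd_cl C) (set (bd_cl C)))"

definition mode_for :: "'p mode \<Rightarrow> ('p, 'f, 'v) program \<Rightarrow> bool" where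
  "mode_for M P \<longleftrightarrow>
     (\<forall>p ts. Pred p ts \<in> atoms_of_prog P \<longrightarrow> (\<exists>ms. M p = Some ms \<and> length ms = length ts))"

definition prog_satisfies :: "('p, 'f, 'v) program \<Rightarrow> 'p mode \<Rightarrow> bool" where
  "prog_satisfies P M \<longleftrightarrow>
     (\<forall>A0 A G. nonbasic A0 \<and> sat_atom M A0 \<and> nonbasic A \<and> steps P [A0] (A # G)
        \<longrightarrow> sat_atom M A)"

definition consistent :: "'p mode \<Rightarrow> ('p, 'f, 'v) goal list \<Rightarrow> bool" where
  "consistent M ds \<longleftrightarrow>
     (\<forall>i A K. Suc i < length ds \<and> ds ! i = A # K \<and> nonbasic A \<longrightarrow> sat_atom M A)"

fun input_vars :: "'p mode \<Rightarrow> ('p, 'f, 'v) atom \<Rightarrow> 'v set" where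
  "input_vars M (Pred p ts) =
     (\<Union>i\<in>{i. i < length ts \<and> (case M p of Some ms \<Rightarrow> i < length ms \<and> ms ! i | None \<Rightarrow> False)}.
        vars_trm (ts ! i))"
| "input_vars M _ = {}"

definition local_var_of :: "('p, 'f, 'v) clause \<Rightarrow> nat \<Rightarrow> 'v \<Rightarrow> bool" where
  "local_var_of C i X \<longleftrightarrow>
     i < length (bd_cl C) \<and> X \<in> vars_atom (bd_cl C ! i) \<and>
     X \<notin> vars_atom (hd_cl C) \<union> vars_goal (take i (bd_cl C)) \<union> vars_goal (drop (Suc i) (bd_cl C))"

definition safe_clause :: "'p mode \<Rightarrow> ('p, 'f, 'v) clause \<Rightarrow> bool" where
  "safe_clause M C \<longleftrightarrow>
     (\<forall>i t1 t2. i < length (bd_cl C) \<and> bd_cl C ! i = Neq t1 t2 \<longrightarrow>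
        (\<forall>X \<in> vars_trm t1 \<union> vars_trm t2. X \<in> input_vars M (hd_cl C) \<or> local_var_of C i X))"

definition safe_prog :: "'p mode \<Rightarrow> ('p, 'f, 'v) program \<Rightarrow> bool" where
  "safe_prog M P \<longleftrightarrow> (\<forall>C\<in>P. safe_clause M C)"

end

theory Submission
  imports Defs
begin

lemma subst_trm_Var [simp]: "subst_trm Var t = t"
  by (induction t) (auto simp: map_idI)

lemma vars_subst_trm: "vars_trm (subst_trm \<sigma> t) = (\<Union>x\<in>vars_trm t. vars_trm (\<sigma> x))"
  by (induction t) auto

lemma subst_comp_apply [simp]: "subst_trm (subst_comp \<sigma> \<tau>) t = subst_trm \<tau> (subst_trm \<sigma> t)"
  by (induction t) (auto simp: subst_comp_def)

lemma subst_trm_cong: "(\<And>x. x \<in> vars_trm t \<Longrightarrow> \<sigma> x = \<tau> x) \<Longrightarrow> subst_trm \<sigma> t = subst_trm \<tau> t"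
  by (induction t) auto

lemma subst_comp_assoc: "subst_comp (subst_comp a b) c = subst_comp a (subst_comp b c)"
proof -
  have "subst_trm c (subst_trm b u) = subst_trm (\<lambda>x. subst_trm c (b x)) u" for u
    using subst_comp_apply[of b c u] by (simp add: subst_comp_def)
  then show ?thesis by (simp add: subst_comp_def)
qed

lemma subst_comp_Var_left [simp]: "subst_comp Var \<sigma> = \<sigma>"
  by (auto simp: subst_comp_def)

lemma subst_comp_Var_right [simp]: "subst_comp \<sigma> Var = \<sigma>"
  by (auto simp: subst_comp_def)

lemma finite_vars_trm [simp]: "finite (vars_trm t)"
  by (induction t) auto

lemma ground_subst: "ground t \<Longrightarrow> subst_trm \<sigma> t = t"
  by (rule trans[OF subst_trm_cong[of t \<sigma> Var]]) (auto simp: ground_def)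

lemma vars_sigma: "vars_trm (\<sigma> z) \<subseteq> (if z \<in> sdom \<sigma> then svran \<sigma> else {z})"
  by (auto simp: sdom_def svran_def)

lemma occurs_size:
  "x \<in> vars_trm t \<Longrightarrow> size (\<sigma> x) \<le> size (subst_trm \<sigma> t) \<and> (t \<noteq> Var x \<longrightarrow> size (\<sigma> x) < size (subst_trm \<sigma> t))"
proof (induction t)
  case (Var y)
  then show ?case by auto
next
  case (Fn f ts)
  then obtain u where u: "u \<in> set ts" "x \<in> vars_trm u" by auto
  have "size (\<sigma> x) \<le> size (subst_trm \<sigma> u)" using Fn.IH[OF u] by auto
  moreover have "size (subst_trm \<sigma> u) \<le> size_list size (map (subst_trm \<sigma>) ts)"
    using u(1) by (intro size_list_estimation') auto
  ultimately show ?case by auto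
qed

lemma occurs_check: "x \<in> vars_trm t \<Longrightarrow> t \<noteq> Var x \<Longrightarrow> \<sigma> x \<noteq> subst_trm \<sigma> t"
  using occurs_size[of x t \<sigma>] by auto

section \<open>Unification\<close>

abbreviation pvars :: "(('f, 'v) trm \<times> ('f, 'v) trm) set \<Rightarrow> 'v set" where
  "pvars E \<equiv> (\<Union>(s, t)\<in>E. vars_trm s \<union> vars_trm t)"

definition substP :: "('f, 'v) subst \<Rightarrow> (('f, 'v) trm \<times> ('f, 'v) trm) list \<Rightarrow> (('f, 'v) trm \<times> ('f, 'v) trm) list" where
  "substP \<sigma> L = map (\<lambda>(a, b). (subst_trm \<sigma> a, subst_trm \<sigma> b)) L"

definition sizeP :: "(('f, 'v) trm \<times> ('f, 'v) trm) list \<Rightarrow> nat" where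
  "sizeP L = sum_list (map (\<lambda>(a, b). size a + size b) L)"

lemma unifier_substP: "unifier \<tau> (set (substP \<sigma> L)) \<longleftrightarrow> unifier (subst_comp \<sigma> \<tau>) (set L)"
  by (auto simp: unifier_def substP_def)

lemma unifier_Cons: "unifier \<tau> (set ((s, t) # L)) \<longleftrightarrow> subst_trm \<tau> s = subst_trm \<tau> t \<and> unifier \<tau> (set L)"
  by (auto simp: unifier_def)

lemma good_mgu_equiv:
  assumes "good_mgu \<theta> E'" "pvars E' \<subseteq> pvars E" "\<And>\<tau>. unifier \<tau> E \<longleftrightarrow> unifier \<tau> E'"
  shows "good_mgu \<theta> E"
  using assms unfolding good_mgu_def is_mgu_def relevant_def by blast

lemma subst_idem: "idempotent \<theta> \<Longrightarrow> subst_trm \<theta> (subst_trm \<theta> u) = subst_trm \<theta> u"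
  by (metis idempotent_def subst_comp_apply)

lemma pvars_substP: "pvars (set (substP \<sigma> L)) = (\<Union>(a,b)\<in>set L. vars_trm (subst_trm \<sigma> a) \<union> vars_trm (subst_trm \<sigma> b))"
  unfolding substP_def by auto

lemma subset_aux: "A \<subseteq> insert x B' \<Longrightarrow> V \<subseteq> T \<union> B'' \<Longrightarrow> P1 = insert x (T \<union> P) \<Longrightarrow> B' \<subseteq> P' \<Longrightarrow> B'' \<subseteq> P' \<Longrightarrow> P' \<subseteq> P - {x} \<union> T \<Longrightarrow> A \<union> V \<subseteq> P1"
  by blast

lemma elim_step:
  fixes t :: "('f, 'v) trm" and x :: 'v
  defines "\<eta> \<equiv> Var(x := t)"
  assumes xt: "x \<notin> vars_trm t" and g: "good_mgu \<theta>' (set (substP \<eta> L))"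
  shows "good_mgu (subst_comp \<eta> \<theta>') (set ((Var x, t) # L))"
proof -
  define \<theta> where "\<theta> = subst_comp \<eta> \<theta>'"
  have \<eta>t: "subst_trm \<eta> t = t"
    using xt by (intro trans[OF subst_trm_cong[of t \<eta> Var]]) (auto simp: \<eta>_def)
  have u': "unifier \<theta>' (set (substP \<eta> L))" using g by (auto simp: good_mgu_def is_mgu_def)
  have unif: "unifier \<theta> (set ((Var x, t) # L))"
  proof -
    have "\<theta> x = subst_trm \<theta>' t" by (simp add: \<theta>_def subst_comp_def \<eta>_def)
    moreover have "subst_trm \<theta> t = subst_trm \<theta>' t" using \<eta>t by (simp add: \<theta>_def)
    moreover have "unifier \<theta> (set L)" using u' by (simp add: unifier_substP \<theta>_def)
    ultimately show ?thesis unfolding unifier_Cons by simp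
  qed
  have mg: "\<exists>\<gamma>. \<tau> = subst_comp \<theta> \<gamma>" if "unifier \<tau> (set ((Var x, t) # L))" for \<tau>
  proof -
    have tx: "\<tau> x = subst_trm \<tau> t" and uL: "unifier \<tau> (set L)" using that by (auto simp: unifier_def)
    have e: "subst_comp \<eta> \<tau> = \<tau>" using tx by (auto simp: subst_comp_def \<eta>_def)
    have "unifier \<tau> (set (substP \<eta> L))" using uL e by (simp add: unifier_substP)
    then obtain \<gamma> where "\<tau> = subst_comp \<theta>' \<gamma>" using g by (auto simp: good_mgu_def is_mgu_def)
    then have "\<tau> = subst_comp \<theta> \<gamma>" using e by (metis \<theta>_def subst_comp_assoc)
    then show ?thesis by blast
  qed
  have pv: "pvars (set (substP \<eta> L)) \<subseteq> (pvars (set L) - {x}) \<union> vars_trm t"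
  proof -
    have "vars_trm (subst_trm \<eta> a) \<subseteq> (vars_trm a - {x}) \<union> vars_trm t" for a
      by (auto simp: vars_subst_trm \<eta>_def split: if_splits)
    then show ?thesis unfolding pvars_substP by fastforce
  qed
  have rel': "sdom \<theta>' \<union> svran \<theta>' \<subseteq> pvars (set (substP \<eta> L))"
    using g by (auto simp: good_mgu_def relevant_def)
  have "x \<notin> pvars (set (substP \<eta> L))" using pv xt by auto
  then have x_notin: "x \<notin> sdom \<theta>' \<union> svran \<theta>'" using rel' by auto
  have idem': "idempotent \<theta>'" using g by (auto simp: good_mgu_def)
  have vz: "x \<notin> vars_trm (\<theta>' z)" if "z \<noteq> x" for z
    using vars_sigma[of \<theta>' z] x_notin that by (auto split: if_splits)
  have x_notin_theta: "x \<notin> vars_trm (\<theta> y)" for y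
  proof -
    have "x \<notin> vars_trm (\<eta> y)" using xt by (auto simp: \<eta>_def)
    then have "\<forall>z\<in>vars_trm (\<eta> y). x \<notin> vars_trm (\<theta>' z)" using vz by metis
    then show ?thesis by (simp add: \<theta>_def subst_comp_def vars_subst_trm)
  qed
  have idem: "idempotent \<theta>"
  proof -
    have "subst_trm \<theta> (\<theta> y) = \<theta> y" for y
    proof -
      have "subst_trm \<theta> (\<theta> y) = subst_trm \<theta>' (subst_trm \<eta> (\<theta> y))" by (simp add: \<theta>_def)
      also have "subst_trm \<eta> (\<theta> y) = \<theta> y"
        using x_notin_theta[of y] by (intro trans[OF subst_trm_cong[of _ \<eta> Var]]) (auto simp: \<eta>_def)
      also have "subst_trm \<theta>' (\<theta> y) = \<theta> y"
        by (simp add: \<theta>_def subst_comp_def subst_idem[OF idem'])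
      finally show ?thesis .
    qed
    then show ?thesis by (auto simp: idempotent_def subst_comp_def)
  qed
  have rel: "sdom \<theta> \<union> svran \<theta> \<subseteq> pvars (set ((Var x, t) # L))"
  proof -
    have d: "sdom \<theta> \<subseteq> insert x (sdom \<theta>')"
      by (auto simp: sdom_def \<theta>_def subst_comp_def \<eta>_def)
    have "vars_trm (\<theta> y) \<subseteq> vars_trm t \<union> svran \<theta>'" if "y \<in> sdom \<theta>" for y
    proof (cases "y = x")
      case True
      then have "\<theta> y = subst_trm \<theta>' t" by (simp add: \<theta>_def subst_comp_def \<eta>_def)
      then show ?thesis using vars_sigma[of \<theta>'] by (fastforce simp: vars_subst_trm split: if_splits)
    next
      case False
      then have "\<theta> y = \<theta>' y" by (simp add: \<theta>_def subst_comp_def \<eta>_def)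
      moreover have "y \<in> sdom \<theta>'" using that False d by auto
      ultimately show ?thesis by (auto simp: svran_def)
    qed
    then have sv: "svran \<theta> \<subseteq> vars_trm t \<union> svran \<theta>'" by (auto simp: svran_def)
    have eqp: "pvars (set ((Var x, t) # L)) = insert x (vars_trm t \<union> pvars (set L))" by auto
    have r1: "sdom \<theta>' \<subseteq> pvars (set (substP \<eta> L))" and r2: "svran \<theta>' \<subseteq> pvars (set (substP \<eta> L))"
      using rel' by auto
    show ?thesis by (rule subset_aux[OF d sv eqp r1 r2 pv])
  qed
  show ?thesis using unif mg rel idem
    by (auto simp: good_mgu_def is_mgu_def relevant_def \<theta>_def)
qed

lemma size_pos: "0 < size (t :: ('f, 'v) trm)"
  by (cases t) auto


lemma sizeP_zip_le: "sizeP (zip ss ts) \<le> sum_list (map size ss) + sum_list (map size ts)"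
proof (induction ss arbitrary: ts)
  case Nil then show ?case by (simp add: sizeP_def)
next
  case (Cons a ss) then show ?case by (cases ts) (auto simp: sizeP_def)
qed

lemma size_list_ge: "sum_list (map f xs) \<le> size_list f xs"
  by (induction xs) auto

lemma unifier_zip: "length ss = length ts \<Longrightarrow>
   unifier \<tau> (set (zip ss ts)) \<longleftrightarrow> map (subst_trm \<tau>) ss = map (subst_trm \<tau>) ts"
proof (induction ss arbitrary: ts)
  case Nil then show ?case by (auto simp: unifier_def)
next
  case (Cons a ss) then show ?case by (cases ts) (auto simp: unifier_def)
qed

lemma pvars_zip: "length ss = length ts \<Longrightarrow>
   pvars (set (zip ss ts)) = (\<Union>u\<in>set ss. vars_trm u) \<union> (\<Union>u\<in>set ts. vars_trm u)"
proof (induction ss arbitrary: ts)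
  case Nil then show ?case by auto
next
  case (Cons a ss) then show ?case by (cases ts) auto
qed

lemma finite_pvars: "finite (pvars (set L))"
  by auto

lemma psub_aux: "A \<subseteq> B - {x} \<Longrightarrow> x \<in> B \<Longrightarrow> A \<subset> B"
  by auto

lemma unifier_insert [simp]: "unifier \<tau> (insert (s, t) E) \<longleftrightarrow> subst_trm \<tau> s = subst_trm \<tau> t \<and> unifier \<tau> E"
  by (auto simp: unifier_def)

lemma unifier_union: "unifier \<tau> (A \<union> B) \<longleftrightarrow> unifier \<tau> A \<and> unifier \<tau> B"
  by (auto simp: unifier_def)

lemma pvars_insert [simp]: "pvars (insert (a, b) E) = vars_trm a \<union> vars_trm b \<union> pvars E"
  by auto

lemma good_mgu_Var_empty: "good_mgu Var {}"
proof -
  have "sdom Var = {}" by (simp add: sdom_def)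
  moreover have "svran Var = {}" by (simp add: svran_def sdom_def)
  ultimately show ?thesis
    unfolding good_mgu_def is_mgu_def relevant_def idempotent_def unifier_def by simp
qed

lemma unif_exists_list:
  "\<forall>\<sigma>. unifier \<sigma> (set L) \<longrightarrow> (\<exists>\<theta>. good_mgu \<theta> (set L))"
proof (induct L rule: wf_induct[OF wf_measures[of "[\<lambda>L. card (pvars (set L)), sizeP]"]])
  case (1 L)
  show ?case
  proof (intro allI impI)
    fix \<sigma> assume uL: "unifier \<sigma> (set L)"
    show "\<exists>\<theta>. good_mgu \<theta> (set L)"
    proof (cases L)
      case Nil
      then show ?thesis
        using good_mgu_Var_empty by auto
    next
      case (Cons p L')
      obtain s t where p: "p = (s, t)" by (cases p)
      have IH: "\<And>L2 \<sigma>. (L2, L) \<in> measures [\<lambda>L. card (pvars (set L)), sizeP] \<Longrightarrow> unifier \<sigma> (set L2) \<Longrightarrow>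
          \<exists>\<theta>. good_mgu \<theta> (set L2)" using 1 by blast
      have elim: "\<exists>\<theta>. good_mgu \<theta> (set ((Var x, u) # L'))"
        if xu: "x \<notin> vars_trm u" and ux: "\<sigma> x = subst_trm \<sigma> u" and uL': "unifier \<sigma> (set L')"
          and pv: "pvars (set ((Var x, u) # L')) = pvars (set L)" for x u
      proof -
        define \<eta> where "\<eta> = Var(x := u)"
        have e: "subst_comp \<eta> \<sigma> = \<sigma>" using ux by (auto simp: subst_comp_def \<eta>_def)
        have u2: "unifier \<sigma> (set (substP \<eta> L'))" using uL' e by (simp add: unifier_substP)
        have sub: "pvars (set (substP \<eta> L')) \<subseteq> pvars (set L) - {x}"
        proof -
          have "vars_trm (subst_trm \<eta> a) \<subseteq> (vars_trm a - {x}) \<union> vars_trm u" for a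
            by (auto simp: vars_subst_trm \<eta>_def split: if_splits)
          then have "pvars (set (substP \<eta> L')) \<subseteq> (pvars (set L') - {x}) \<union> vars_trm u"
            unfolding pvars_substP by fastforce
          then show ?thesis using pv[symmetric] xu by auto
        qed
        have "x \<in> pvars (set L)" using pv by auto
        then have "pvars (set (substP \<eta> L')) \<subset> pvars (set L)" using sub by (rule psub_aux[rotated])
        then have "card (pvars (set (substP \<eta> L'))) < card (pvars (set L))"
          by (rule psubset_card_mono[OF finite_pvars])
        then have "(substP \<eta> L', L) \<in> measures [\<lambda>L. card (pvars (set L)), sizeP]" by auto
        then obtain \<theta>' where "good_mgu \<theta>' (set (substP \<eta> L'))" using IH u2 by blast
        then show ?thesis using elim_step[OF xu, of _ L'] by (auto simp: \<eta>_def)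
      qed
      show ?thesis
      proof (cases "s = t")
        case True
        have "pvars (set L') \<subseteq> pvars (set L)" using Cons by auto
        then have "card (pvars (set L')) \<le> card (pvars (set L))" by (intro card_mono) auto
        moreover have "sizeP L' < sizeP L" using Cons p size_pos[of s] by (auto simp: sizeP_def)
        ultimately have "(L', L) \<in> measures [\<lambda>L. card (pvars (set L)), sizeP]"
          by (auto intro: measures_lesseq measures_less)
        moreover have "unifier \<sigma> (set L')" using uL Cons by (auto simp: unifier_def)
        ultimately obtain \<theta> where "good_mgu \<theta> (set L')" using IH by blast
        then show ?thesis
          apply -
          apply (rule exI[of _ \<theta>], rule good_mgu_equiv[of _ "set L'"])
          using Cons p True \<open>pvars (set L') \<subseteq> pvars (set L)\<close> by simp_all
      next
        case False
        have st: "subst_trm \<sigma> s = subst_trm \<sigma> t" and uL': "unifier \<sigma> (set L')"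
          using uL Cons p by simp_all
        show ?thesis
        proof (cases s)
          case (Var x)
          have xt: "x \<notin> vars_trm t" using occurs_check[of x t \<sigma>] st False Var by auto
          have pe: "pvars (set ((Var x, t) # L')) = pvars (set L)" using Var Cons p by simp
          have "\<sigma> x = subst_trm \<sigma> t" using st Var by simp
          from elim[OF xt this uL' pe] show ?thesis using Var Cons p by simp
        next
          case (Fn f ss)
          show ?thesis
          proof (cases t)
            case (Var x)
            have xs: "x \<notin> vars_trm s" using occurs_check[of x s \<sigma>] st False Var by auto
            have pe: "pvars (set ((Var x, s) # L')) = pvars (set L)" using Var Cons p by (simp add: Un_ac)
            have "\<sigma> x = subst_trm \<sigma> s" using st Var by simp
            from elim[OF xs this uL' pe] obtain \<theta> where "good_mgu \<theta> (set ((Var x, s) # L'))" by blast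
            moreover have "unifier \<tau> (set L) \<longleftrightarrow> unifier \<tau> (set ((Var x, s) # L'))" for \<tau>
              using Cons p Var by auto
            ultimately show ?thesis
              apply -
              apply (rule exI[of _ \<theta>], rule good_mgu_equiv[of _ "set ((Var x, s) # L')"])
              using pe by simp_all
          next
            case (Fn g ts)
            have fg: "f = g" and len: "length ss = length ts" and mm: "map (subst_trm \<sigma>) ss = map (subst_trm \<sigma>) ts"
              using st \<open>s = Fn f ss\<close> Fn by (auto dest: map_eq_imp_length_eq)
            define L2 where "L2 = zip ss ts @ L'"
            have pv2: "pvars (set L2) = pvars (set L)"
              using pvars_zip[OF len] Cons p \<open>s = Fn f ss\<close> Fn by (simp add: L2_def Un_ac)
            have "sizeP L2 = sizeP (zip ss ts) + sizeP L'" by (simp add: L2_def sizeP_def)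
            moreover have "sizeP L = size s + size t + sizeP L'" using Cons p by (simp add: sizeP_def)
            moreover have "size s = size_list size ss + 1" "size t = size_list size ts + 1"
              using \<open>s = Fn f ss\<close> Fn by simp_all
            ultimately have "sizeP L2 < sizeP L"
              using sizeP_zip_le[of ss ts] size_list_ge[of size ss] size_list_ge[of size ts] by linarith
            then have "(L2, L) \<in> measures [\<lambda>L. card (pvars (set L)), sizeP]"
              using pv2 by (simp add: measures_lesseq measures_less)
            moreover have "unifier \<sigma> (set L2)" using uL' mm unifier_zip[OF len] by (simp add: L2_def unifier_union)
            ultimately obtain \<theta> where th: "good_mgu \<theta> (set L2)" using IH by blast
            have "unifier \<tau> (set L) \<longleftrightarrow> unifier \<tau> (set L2)" for \<tau>
              using unifier_zip[OF len, of \<tau>] Cons p \<open>s = Fn f ss\<close> Fn fg len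
              by (simp add: L2_def unifier_union)
            then show ?thesis
              apply -
              apply (rule exI[of _ \<theta>], rule good_mgu_equiv[of _ "set L2"])
              using th pv2 by auto
          qed
        qed
      qed
    qed
  qed
qed

lemma unif_exists: "unifier \<sigma> (set L) \<Longrightarrow> \<exists>\<theta>. good_mgu \<theta> (set L)"
  using unif_exists_list by blast

definition relv :: "('f, 'v) subst \<Rightarrow> 'v set \<Rightarrow> bool" where
  "relv \<sigma> V \<longleftrightarrow> (\<forall>x. x \<notin> V \<longrightarrow> \<sigma> x = Var x) \<and> (\<forall>x\<in>V. vars_trm (\<sigma> x) \<subseteq> V)"

lemma good_mgu_relv: "good_mgu \<theta> E \<Longrightarrow> relv \<theta> (pvars E)"
  unfolding relv_def
proof (intro conjI allI impI ballI)
  fix x assume g: "good_mgu \<theta> E"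
  then have r: "sdom \<theta> \<union> svran \<theta> \<subseteq> pvars E" by (simp add: good_mgu_def relevant_def)
  { assume "x \<notin> pvars E" then show "\<theta> x = Var x" using r by (auto simp: sdom_def) }
  { assume "x \<in> pvars E" then show "vars_trm (\<theta> x) \<subseteq> pvars E"
      using r vars_sigma[of \<theta> x] by (auto split: if_splits) }
qed

lemma relv_var_bound: "relv \<sigma> V \<Longrightarrow> vars_trm (\<sigma> z) \<subseteq> insert z V"
  by (cases "z \<in> V") (auto simp: relv_def)

lemma relv_mono: "relv \<sigma> V \<Longrightarrow> V \<subseteq> W \<Longrightarrow> relv \<sigma> W"
  unfolding relv_def
proof (intro conjI allI impI ballI)
  fix x assume a: "(\<forall>x. x \<notin> V \<longrightarrow> \<sigma> x = Var x) \<and> (\<forall>x\<in>V. vars_trm (\<sigma> x) \<subseteq> V)" "V \<subseteq> W"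
  { assume "x \<notin> W" then show "\<sigma> x = Var x" using a by auto }
  { assume "x \<in> W" then show "vars_trm (\<sigma> x) \<subseteq> W" using a by (cases "x \<in> V") auto }
qed

lemma relv_Var: "relv Var V"
  by (simp add: relv_def)

lemma relv_vars: "relv \<sigma> V \<Longrightarrow> vars_trm (subst_trm \<sigma> t) \<subseteq> vars_trm t \<union> V"
  using relv_var_bound[of \<sigma> V] unfolding vars_subst_trm by blast

lemma relv_comp: "relv \<sigma> V \<Longrightarrow> relv \<tau> W \<Longrightarrow> relv (subst_comp \<sigma> \<tau>) (V \<union> W)"
proof -
  assume a: "relv \<sigma> V" "relv \<tau> W"
  have "subst_comp \<sigma> \<tau> x = Var x" if "x \<notin> V \<union> W" for x
    using a that by (simp add: relv_def subst_comp_def)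
  moreover have "vars_trm (subst_comp \<sigma> \<tau> x) \<subseteq> V \<union> W" if "x \<in> V \<union> W" for x
  proof -
    have "vars_trm (\<sigma> x) \<subseteq> V \<union> W"
      using a(1) that by (cases "x \<in> V") (auto simp: relv_def)
    then show ?thesis using relv_vars[OF a(2), of "\<sigma> x"] by (auto simp: subst_comp_def)
  qed
  ultimately show ?thesis by (auto simp: relv_def)
qed

lemma relv_fix: "relv \<sigma> V \<Longrightarrow> vars_trm t \<inter> V = {} \<Longrightarrow> subst_trm \<sigma> t = t"
  by (rule trans[OF subst_trm_cong[of t \<sigma> Var]]) (auto simp: relv_def)

definition untouched :: "('f, 'v) subst \<Rightarrow> 'v \<Rightarrow> bool" where
  "untouched \<sigma> x \<longleftrightarrow> \<sigma> x = Var x \<and> (\<forall>y. x \<in> vars_trm (\<sigma> y) \<longrightarrow> y = x)"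

lemma relv_untouched: "relv \<sigma> V \<Longrightarrow> x \<notin> V \<Longrightarrow> untouched \<sigma> x"
proof -
  assume a: "relv \<sigma> V" "x \<notin> V"
  have "y = x" if "x \<in> vars_trm (\<sigma> y)" for y
    using a that relv_var_bound[OF a(1), of y] by auto
  then show ?thesis using a by (auto simp: untouched_def relv_def)
qed

lemma untouched_gen: assumes "untouched \<sigma> x" shows "x \<in> (\<Union>z\<in>A. vars_trm (\<sigma> z)) \<longleftrightarrow> x \<in> A"
proof -
  have a: "\<sigma> x = Var x" and b: "\<And>y. x \<in> vars_trm (\<sigma> y) \<Longrightarrow> y = x" using assms by (auto simp: untouched_def)
  show ?thesis
  proof
    assume "x \<in> (\<Union>z\<in>A. vars_trm (\<sigma> z))" then obtain z where "z \<in> A" "x \<in> vars_trm (\<sigma> z)" by blast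
    then show "x \<in> A" using b by blast
  next
    assume "x \<in> A" then show "x \<in> (\<Union>z\<in>A. vars_trm (\<sigma> z))" using a by force
  qed
qed

lemma untouched_vars: "untouched \<sigma> x \<Longrightarrow> x \<in> vars_trm (subst_trm \<sigma> t) \<longleftrightarrow> x \<in> vars_trm t"
  unfolding vars_subst_trm by (rule untouched_gen)

lemma subst_atom_Var [simp]: "subst_atom Var a = a"
  by (cases a) (auto simp: map_idI)

lemma subst_goal_Var [simp]: "subst_goal Var G = G"
  by (simp add: subst_goal_def map_idI)

lemma subst_goal_Nil [simp]: "subst_goal \<sigma> [] = []"
  by (simp add: subst_goal_def)

lemma subst_goal_Cons [simp]: "subst_goal \<sigma> (a # G) = subst_atom \<sigma> a # subst_goal \<sigma> G"
  by (simp add: subst_goal_def)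

lemma subst_goal_append [simp]: "subst_goal \<sigma> (G @ H) = subst_goal \<sigma> G @ subst_goal \<sigma> H"
  by (simp add: subst_goal_def)

lemma subst_atom_comp [simp]: "subst_atom (subst_comp \<sigma> \<tau>) a = subst_atom \<tau> (subst_atom \<sigma> a)"
  by (cases a) auto

lemma subst_goal_comp [simp]: "subst_goal (subst_comp \<sigma> \<tau>) G = subst_goal \<tau> (subst_goal \<sigma> G)"
  by (simp add: subst_goal_def)

lemma vars_goal_Nil [simp]: "vars_goal [] = {}"
  by (simp add: vars_goal_def)

lemma vars_goal_Cons [simp]: "vars_goal (a # G) = vars_atom a \<union> vars_goal G"
  by (simp add: vars_goal_def)

lemma vars_goal_append [simp]: "vars_goal (G @ H) = vars_goal G \<union> vars_goal H"
  by (simp add: vars_goal_def)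

lemma vars_subst_atom: "vars_atom (subst_atom \<sigma> a) = (\<Union>x\<in>vars_atom a. vars_trm (\<sigma> x))"
  by (cases a) (auto simp: vars_subst_trm)

lemma vars_subst_goal: "vars_goal (subst_goal \<sigma> G) = (\<Union>x\<in>vars_goal G. vars_trm (\<sigma> x))"
  by (induction G) (auto simp: vars_subst_atom)

lemma subst_atom_cong: "(\<And>x. x \<in> vars_atom a \<Longrightarrow> \<sigma> x = \<tau> x) \<Longrightarrow> subst_atom \<sigma> a = subst_atom \<tau> a"
  by (cases a) (auto intro: subst_trm_cong)

lemma subst_goal_cong: "(\<And>x. x \<in> vars_goal G \<Longrightarrow> \<sigma> x = \<tau> x) \<Longrightarrow> subst_goal \<sigma> G = subst_goal \<tau> G"
  by (induction G) (auto intro: subst_atom_cong)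

lemma finite_vars_atom [simp]: "finite (vars_atom a)"
  by (cases a) auto

lemma finite_vars_goal [simp]: "finite (vars_goal G)"
  by (induction G) auto

lemma relv_vars_goal: "relv \<sigma> V \<Longrightarrow> vars_goal (subst_goal \<sigma> G) \<subseteq> vars_goal G \<union> V"
  using relv_var_bound[of \<sigma> V] unfolding vars_subst_goal by blast

lemma relv_vars_atom: "relv \<sigma> V \<Longrightarrow> vars_atom (subst_atom \<sigma> a) \<subseteq> vars_atom a \<union> V"
  using relv_vars_goal[of \<sigma> V "[a]"] by simp

lemma relv_fix_goal: "relv \<sigma> V \<Longrightarrow> vars_goal G \<inter> V = {} \<Longrightarrow> subst_goal \<sigma> G = G"
  by (rule trans[OF subst_goal_cong[of G \<sigma> Var]]) (auto simp: relv_def)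

lemma relv_fix_atom: "relv \<sigma> V \<Longrightarrow> vars_atom a \<inter> V = {} \<Longrightarrow> subst_atom \<sigma> a = a"
  using relv_fix_goal[of \<sigma> V "[a]"] by simp

lemma untouched_vars_goal: "untouched \<sigma> x \<Longrightarrow> x \<in> vars_goal (subst_goal \<sigma> G) \<longleftrightarrow> x \<in> vars_goal G"
  unfolding vars_subst_goal by (rule untouched_gen)

lemma untouched_vars_atom: "untouched \<sigma> x \<Longrightarrow> x \<in> vars_atom (subst_atom \<sigma> a) \<longleftrightarrow> x \<in> vars_atom a"
  using untouched_vars_goal[of \<sigma> x "[a]"] by simp

section \<open>MGU composition\<close>

definition substS :: "('f, 'v) subst \<Rightarrow> (('f, 'v) trm \<times> ('f, 'v) trm) set \<Rightarrow> (('f, 'v) trm \<times> ('f, 'v) trm) set" where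
  "substS \<sigma> E = (\<lambda>(a, b). (subst_trm \<sigma> a, subst_trm \<sigma> b)) ` E"

lemma set_substP: "set (substP \<sigma> L) = substS \<sigma> (set L)"
  by (simp add: substP_def substS_def)

lemma unifier_substS: "unifier \<tau> (substS \<sigma> E) \<longleftrightarrow> unifier (subst_comp \<sigma> \<tau>) E"
  by (auto simp: unifier_def substS_def)

lemma mgu_factor: "is_mgu \<sigma> E \<Longrightarrow> unifier \<tau> E \<Longrightarrow> \<exists>\<gamma>. \<tau> = subst_comp \<sigma> \<gamma>"
  by (simp add: is_mgu_def)

lemma mgu_comp:
  assumes "is_mgu \<theta>1 E1" "is_mgu \<theta>2 (substS \<theta>1 E2)"
  shows "is_mgu (subst_comp \<theta>1 \<theta>2) (E1 \<union> E2)"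
proof -
  have u1: "unifier \<theta>1 E1" and u2: "unifier \<theta>2 (substS \<theta>1 E2)" using assms by (auto simp: is_mgu_def)
  have "unifier (subst_comp \<theta>1 \<theta>2) E1" using u1 by (auto simp: unifier_def)
  moreover have "unifier (subst_comp \<theta>1 \<theta>2) E2" using u2 by (simp add: unifier_substS)
  moreover have "\<exists>\<gamma>. \<tau> = subst_comp (subst_comp \<theta>1 \<theta>2) \<gamma>" if "unifier \<tau> (E1 \<union> E2)" for \<tau>
  proof -
    have "unifier \<tau> E1" using that by (simp add: unifier_union)
    then obtain \<gamma> where g: "\<tau> = subst_comp \<theta>1 \<gamma>" using mgu_factor[OF assms(1)] by blast
    then have "unifier \<gamma> (substS \<theta>1 E2)" using that by (simp add: unifier_substS unifier_union)
    then obtain \<delta> where "\<gamma> = subst_comp \<theta>2 \<delta>" using assms(2) by (auto simp: is_mgu_def)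
    then have "\<tau> = subst_comp (subst_comp \<theta>1 \<theta>2) \<delta>" using g by (simp add: subst_comp_assoc)
    then show ?thesis by blast
  qed
  ultimately show ?thesis by (simp add: is_mgu_def unifier_union)
qed

lemma good_mgu_is_mgu: "good_mgu \<theta> E \<Longrightarrow> is_mgu \<theta> E"
  by (simp add: good_mgu_def)

lemma unif_after:
  assumes "is_mgu \<sigma> E1" "unifier \<tau> (E1 \<union> set L)"
  shows "\<exists>\<theta>. good_mgu \<theta> (set (substP \<sigma> L))"
proof -
  obtain \<gamma> where "\<tau> = subst_comp \<sigma> \<gamma>" using assms by (auto simp: is_mgu_def unifier_union)
  then have "unifier \<gamma> (set (substP \<sigma> L))" using assms(2) by (simp add: unifier_substP unifier_union)
  then show ?thesis by (rule unif_exists)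
qed

lemma is_mgu_unifier: "is_mgu \<theta> E \<Longrightarrow> unifier \<theta> E"
  by (simp add: is_mgu_def)

lemma extend_bij:
  fixes f :: "'a \<Rightarrow> 'a"
  assumes fin: "finite V" and inj: "inj_on f V"
  shows "\<exists>\<rho>. bij \<rho> \<and> (\<forall>x\<in>V. \<rho> x = f x)"
proof -
  define W where "W = f ` V"
  have finW: "finite W" using fin by (simp add: W_def)
  have cW: "card W = card V" using inj by (simp add: W_def card_image)
  have "card (W - V) = card (V - W)"
    using cW fin finW by (simp add: card_Diff_subset_Int Int_commute)
  then obtain h where h: "bij_betw h (W - V) (V - W)"
    using finite_same_card_bij[of "W - V" "V - W"] fin finW by auto
  have bf: "bij_betw f V W" using inj by (simp add: W_def bij_betw_def)
  define g where "g = (\<lambda>x. if x \<in> V then f x else h x)"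
  have bg: "bij_betw g (V \<union> (W - V)) (W \<union> (V - W))"
    unfolding g_def by (rule bij_betw_disjoint_Un[OF bf h]) auto
  have e1: "V \<union> (W - V) = V \<union> W" and e2: "W \<union> (V - W) = V \<union> W" by auto
  have bg': "bij_betw g (V \<union> W) (V \<union> W)" using bg unfolding e1 e2 .
  define U where "U = V \<union> W"
  define \<rho> where "\<rho> = (\<lambda>x. if x \<in> U then g x else id x)"
  have "bij_betw \<rho> (U \<union> (- U)) (U \<union> (- U))"
    unfolding \<rho>_def by (rule bij_betw_disjoint_Un[OF bg'[folded U_def]]) (auto simp: bij_betw_def)
  then have "bij \<rho>" unfolding Compl_partition .
  moreover have "\<forall>x\<in>V. \<rho> x = f x" by (simp add: \<rho>_def g_def U_def)
  ultimately show ?thesis by blast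
qed

lemma inverse_var:
  "subst_trm \<gamma>2 (subst_trm \<gamma>1 t) = t \<Longrightarrow> z \<in> vars_trm t \<Longrightarrow> \<exists>w. \<gamma>1 z = Var w \<and> \<gamma>2 w = Var z"
proof (induction t)
  case (Var y)
  then show ?case by (cases "\<gamma>1 y") auto
next
  case (Fn f ts)
  then obtain u where "u \<in> set ts" "z \<in> vars_trm u" by auto
  moreover have "subst_trm \<gamma>2 (subst_trm \<gamma>1 u) = u"
  proof -
    have "map (\<lambda>u. subst_trm \<gamma>2 (subst_trm \<gamma>1 u)) ts = map (\<lambda>u. u) ts"
      using Fn.prems(1) by (simp add: comp_def)
    then show ?thesis using \<open>u \<in> set ts\<close> unfolding map_eq_conv by blast
  qed
  ultimately show ?case using Fn.IH by blast
qed

lemma mgu_variant: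
  assumes m1: "is_mgu \<phi>1 E" and m2: "is_mgu \<phi>2 E"
  shows "\<exists>\<rho>. bij \<rho> \<and> subst_goal \<phi>2 X = subst_goal (Var \<circ> \<rho>) (subst_goal \<phi>1 X)"
proof -
  obtain \<gamma>1 where g1: "\<phi>2 = subst_comp \<phi>1 \<gamma>1" using m1 is_mgu_unifier[OF m2] by (auto simp: is_mgu_def)
  obtain \<gamma>2 where g2: "\<phi>1 = subst_comp \<phi>2 \<gamma>2" using m2 is_mgu_unifier[OF m1] by (auto simp: is_mgu_def)
  have inv: "subst_trm \<gamma>2 (subst_trm \<gamma>1 (\<phi>1 y)) = \<phi>1 y" for y
    using fun_cong[OF g2, of y] g1 by (simp add: subst_comp_def)
  define V where "V = vars_goal (subst_goal \<phi>1 X)"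
  have vv: "\<exists>w. \<gamma>1 z = Var w \<and> \<gamma>2 w = Var z" if zV: "z \<in> V" for z
  proof -
    obtain y where "z \<in> vars_trm (\<phi>1 y)" using zV unfolding V_def vars_subst_goal by blast
    then show ?thesis using inverse_var[OF inv] by blast
  qed
  define f where "f = (\<lambda>z. case \<gamma>1 z of Var w \<Rightarrow> w | _ \<Rightarrow> z)"
  have fz: "\<gamma>1 z = Var (f z)" if "z \<in> V" for z using vv[OF that] by (auto simp: f_def)
  have "inj_on f V"
  proof (rule inj_onI)
    fix a b assume "a \<in> V" "b \<in> V" "f a = f b"
    have "\<gamma>2 (f z) = Var z" if "z \<in> V" for z using vv[OF that] fz[OF that] by auto
    then show "a = b" using \<open>a \<in> V\<close> \<open>b \<in> V\<close> \<open>f a = f b\<close> by (metis trm.inject(1))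
  qed
  then obtain \<rho> where \<rho>: "bij \<rho>" "\<forall>x\<in>V. \<rho> x = f x" using extend_bij[of V f] by (auto simp: V_def)
  have "subst_goal \<phi>2 X = subst_goal \<gamma>1 (subst_goal \<phi>1 X)" by (simp add: g1)
  also have "\<dots> = subst_goal (Var \<circ> \<rho>) (subst_goal \<phi>1 X)"
    by (rule subst_goal_cong) (simp add: fz \<rho>(2) V_def)
  finally show ?thesis using \<rho>(1) by blast
qed

inductive rstep :: "('p, 'f, 'v) program \<Rightarrow> ('p, 'f, 'v) atom \<Rightarrow> 'v set \<Rightarrow> ('p, 'f, 'v) goal \<Rightarrow> ('f, 'v) subst \<Rightarrow> bool"
  for P where
  r_eq: "good_mgu \<theta> {(t1, t2)} \<Longrightarrow> rstep P (Eq t1 t2) V [] \<theta>"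
| r_neq: "\<not> (\<exists>\<sigma>. subst_trm \<sigma> t1 = subst_trm \<sigma> t2) \<Longrightarrow> rstep P (Neq t1 t2) V [] Var"
| r_res: "\<lbrakk> C0 \<in> P; bij \<rho>; rename_clause \<rho> C0 = Cl p us B;
            vars_clause (Cl p us B) \<inter> (vars_atom (Pred p ts) \<union> V) = {};
            length ts = length us; good_mgu \<theta> (set (zip ts us)) \<rbrakk>
          \<Longrightarrow> rstep P (Pred p ts) V (subst_goal \<theta> B) \<theta>"

lemma step_iff: "step P (A # R) G' \<longleftrightarrow> (\<exists>X \<theta>. rstep P A (vars_goal R) X \<theta> \<and> G' = X @ subst_goal \<theta> R)"
proof
  assume "step P (A # R) G'"
  then show "\<exists>X \<theta>. rstep P A (vars_goal R) X \<theta> \<and> G' = X @ subst_goal \<theta> R"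
  proof cases
    case (step_eq \<theta> t1 t2)
    then show ?thesis by (auto intro: rstep.r_eq)
  next
    case (step_neq t1 t2)
    then show ?thesis by (auto intro!: exI[of _ "[]"] exI[of _ Var] rstep.r_neq)
  next
    case (step_res C0 \<rho> q us B p ts \<theta>)
    then show ?thesis by (auto intro!: exI[of _ "subst_goal \<theta> B"] exI[of _ \<theta>] rstep.r_res)
  qed
next
  assume "\<exists>X \<theta>. rstep P A (vars_goal R) X \<theta> \<and> G' = X @ subst_goal \<theta> R"
  then obtain X \<theta> where r: "rstep P A (vars_goal R) X \<theta>" and g: "G' = X @ subst_goal \<theta> R" by blast
  from r show "step P (A # R) G'"
  proof cases
    case (r_eq t1 t2)
    then show ?thesis using g by (auto intro: step.step_eq)
  next
    case (r_neq t1 t2)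
    then show ?thesis using g by (auto intro: step.step_neq)
  next
    case (r_res C0 \<rho> p us B ts)
    have "step P (Pred p ts # R) (subst_goal \<theta> (B @ R))"
      by (rule step.step_res) (use r_res in auto)
    then show ?thesis using g r_res by simp
  qed
qed

lemma step_Nil: "\<not> step P [] G'"
  by (auto elim: step.cases)

lemma rstep_mono: "rstep P A V X \<theta> \<Longrightarrow> V' \<subseteq> V \<Longrightarrow> rstep P A V' X \<theta>"
proof (induction rule: rstep.induct)
  case (r_eq \<theta> t1 t2 V) then show ?case by (auto intro: rstep.intros)
next
  case (r_neq t1 t2 V) then show ?case by (auto intro: rstep.intros)
next
  case (r_res C0 \<rho> p us B ts V \<theta>)
  then show ?case by (intro rstep.r_res[of C0 P \<rho> p us B]) auto
qed

section \<open>Successful derivations with counters\<close>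

inductive succ :: "('p, 'f, 'v) program \<Rightarrow> ('p, 'f, 'v) goal \<Rightarrow> nat \<Rightarrow> nat \<Rightarrow> bool"
  for P where
  s_nil: "succ P [] 0 0"
| s_step: "step P G G' \<Longrightarrow> succ P G' n k \<Longrightarrow> succ P G (Suc n) (k + (if leftmost_nonbasic G then 1 else 0))"

lemma succ_Nil: "succ P [] n k \<longleftrightarrow> n = 0 \<and> k = 0"
  by (auto elim: succ.cases simp: step_Nil intro: succ.s_nil)

lemma succ_Cons: "succ P (A # R) n k \<longleftrightarrow>
   (\<exists>n' k' X \<theta>. n = Suc n' \<and> k = k' + (if nonbasic A then 1 else 0) \<and>
      rstep P A (vars_goal R) X \<theta> \<and> succ P (X @ subst_goal \<theta> R) n' k')"
proof
  assume "succ P (A # R) n k"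
  then show "\<exists>n' k' X \<theta>. n = Suc n' \<and> k = k' + (if nonbasic A then 1 else 0) \<and>
      rstep P A (vars_goal R) X \<theta> \<and> succ P (X @ subst_goal \<theta> R) n' k'"
    by cases (auto simp: step_iff)
next
  assume "\<exists>n' k' X \<theta>. n = Suc n' \<and> k = k' + (if nonbasic A then 1 else 0) \<and>
      rstep P A (vars_goal R) X \<theta> \<and> succ P (X @ subst_goal \<theta> R) n' k'"
  then obtain n' k' X \<theta> where h: "n = Suc n'" "k = k' + (if nonbasic A then 1 else 0)"
    "rstep P A (vars_goal R) X \<theta>" "succ P (X @ subst_goal \<theta> R) n' k'" by blast
  have "step P (A # R) (X @ subst_goal \<theta> R)" using h(3) by (auto simp: step_iff)
  from succ.s_step[OF this h(4)] show "succ P (A # R) n k" using h(1,2) by simp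
qed

lemma succ_step: "rstep P A (vars_goal R) X \<theta> \<Longrightarrow> succ P (X @ subst_goal \<theta> R) n k \<Longrightarrow>
   succ P (A # R) (Suc n) (k + (if nonbasic A then 1 else 0))"
  using succ_Cons by blast

section \<open>Renaming invariance\<close>

lemma subst_ren_inv: "bij \<rho> \<Longrightarrow> subst_trm (Var \<circ> inv \<rho>) (subst_trm (Var \<circ> \<rho>) t) = t"
proof -
  assume b: "bij \<rho>"
  have "subst_comp (Var \<circ> \<rho>) (Var \<circ> inv \<rho>) = Var"
    using b by (auto simp: subst_comp_def bij_def)
  then show ?thesis by (metis subst_comp_apply subst_trm_Var)
qed

lemma subst_inv_ren: "bij \<rho> \<Longrightarrow> subst_trm (Var \<circ> \<rho>) (subst_trm (Var \<circ> inv \<rho>) t) = t"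
proof -
  assume b: "bij \<rho>"
  have "subst_comp (Var \<circ> inv \<rho>) (Var \<circ> \<rho>) = Var"
    using b by (auto simp: subst_comp_def bij_def surj_f_inv_f)
  then show ?thesis by (metis subst_comp_apply subst_trm_Var)
qed

lemma idem_var: "idempotent \<theta> \<Longrightarrow> subst_trm \<theta> (\<theta> x) = \<theta> x"
  unfolding idempotent_def subst_comp_def by (drule fun_cong[of _ _ x]) simp

lemma subst_ren_then: "bij \<rho> \<Longrightarrow> subst_trm (\<lambda>x. \<gamma> (inv \<rho> x)) (subst_trm (Var \<circ> \<rho>) u) = subst_trm \<gamma> u"
  by (induction u) (auto simp: bij_def)

lemma vars_ren: "vars_trm (subst_trm (Var \<circ> \<rho>) t) = \<rho> ` vars_trm t"
  by (auto simp: vars_subst_trm)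

lemma vars_ren_atom: "vars_atom (subst_atom (Var \<circ> \<rho>) a) = \<rho> ` vars_atom a"
  by (auto simp: vars_subst_atom)

lemma vars_ren_goal: "vars_goal (subst_goal (Var \<circ> \<rho>) G) = \<rho> ` vars_goal G"
  by (auto simp: vars_subst_goal)

definition conjs :: "('v \<Rightarrow> 'v) \<Rightarrow> ('f, 'v) subst \<Rightarrow> ('f, 'v) subst" where
  "conjs \<rho> \<theta> = (\<lambda>y. subst_trm (Var \<circ> \<rho>) (\<theta> (inv \<rho> y)))"

lemma conjs_comp: "bij \<rho> \<Longrightarrow> subst_comp (Var \<circ> \<rho>) (conjs \<rho> \<theta>) = subst_comp \<theta> (Var \<circ> \<rho>)"
  by (auto simp: subst_comp_def conjs_def bij_def)

lemma conjs_apply: "bij \<rho> \<Longrightarrow> subst_trm (conjs \<rho> \<theta>) (subst_trm (Var \<circ> \<rho>) t) = subst_trm (Var \<circ> \<rho>) (subst_trm \<theta> t)"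
  by (metis conjs_comp subst_comp_apply)

lemma conjs_apply_atom: "bij \<rho> \<Longrightarrow> subst_atom (conjs \<rho> \<theta>) (subst_atom (Var \<circ> \<rho>) a) = subst_atom (Var \<circ> \<rho>) (subst_atom \<theta> a)"
  by (metis conjs_comp subst_atom_comp)

lemma conjs_apply_goal: "bij \<rho> \<Longrightarrow> subst_goal (conjs \<rho> \<theta>) (subst_goal (Var \<circ> \<rho>) G) = subst_goal (Var \<circ> \<rho>) (subst_goal \<theta> G)"
  by (metis conjs_comp subst_goal_comp)

lemma ren_eq_Var: "bij \<rho> \<Longrightarrow> subst_trm (Var \<circ> \<rho>) u = Var (\<rho> x) \<longleftrightarrow> u = Var x"
proof
  assume b: "bij \<rho>" and e: "subst_trm (Var \<circ> \<rho>) u = Var (\<rho> x)"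
  have "u = subst_trm (Var \<circ> inv \<rho>) (subst_trm (Var \<circ> \<rho>) u)" by (rule subst_ren_inv[OF b, symmetric])
  also have "\<dots> = Var x" using e b by (simp add: bij_def)
  finally show "u = Var x" .
qed simp

lemma set_inv_image:
  assumes b: "bij \<rho>" and h: "\<And>y. y \<in> S' \<longleftrightarrow> inv \<rho> y \<in> S"
  shows "S' = \<rho> ` S"
proof
  show "S' \<subseteq> \<rho> ` S"
  proof
    fix y assume "y \<in> S'"
    then have "inv \<rho> y \<in> S" using h by blast
    moreover have "\<rho> (inv \<rho> y) = y" using b by (simp add: bij_def surj_f_inv_f)
    ultimately show "y \<in> \<rho> ` S" by (metis image_eqI)
  qed
  show "\<rho> ` S \<subseteq> S'"
  proof
    fix y assume "y \<in> \<rho> ` S"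
    then obtain x where x: "x \<in> S" "y = \<rho> x" by blast
    moreover have "inv \<rho> (\<rho> x) = x" using b by (simp add: bij_def)
    ultimately show "y \<in> S'" using h by simp
  qed
qed

lemma sdom_conjs: "bij \<rho> \<Longrightarrow> sdom (conjs \<rho> \<theta>) = \<rho> ` sdom \<theta>"
proof -
  assume b: "bij \<rho>"
  have "y \<in> sdom (conjs \<rho> \<theta>) \<longleftrightarrow> inv \<rho> y \<in> sdom \<theta>" for y
  proof -
    have y: "y = \<rho> (inv \<rho> y)" using b by (simp add: bij_def surj_f_inv_f)
    have "y \<in> sdom (conjs \<rho> \<theta>) \<longleftrightarrow> subst_trm (Var \<circ> \<rho>) (\<theta> (inv \<rho> y)) \<noteq> Var y"
      by (simp add: sdom_def conjs_def)
    also have "\<dots> \<longleftrightarrow> subst_trm (Var \<circ> \<rho>) (\<theta> (inv \<rho> y)) \<noteq> Var (\<rho> (inv \<rho> y))"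
      by (metis y)
    also have "\<dots> \<longleftrightarrow> \<theta> (inv \<rho> y) \<noteq> Var (inv \<rho> y)" using ren_eq_Var[OF b] by blast
    finally show ?thesis by (simp add: sdom_def)
  qed
  then show ?thesis using set_inv_image[OF b] by blast
qed

lemma svran_conjs: "bij \<rho> \<Longrightarrow> svran (conjs \<rho> \<theta>) = \<rho> ` svran \<theta>"
proof -
  assume b: "bij \<rho>"
  have "svran (conjs \<rho> \<theta>) = (\<Union>y\<in>\<rho> ` sdom \<theta>. vars_trm (conjs \<rho> \<theta> y))"
    by (simp add: svran_def sdom_conjs[OF b])
  also have "\<dots> = (\<Union>x\<in>sdom \<theta>. \<rho> ` vars_trm (\<theta> x))"
    using b by (simp add: conjs_def vars_ren bij_def)
  also have "\<dots> = \<rho> ` svran \<theta>" by (auto simp: svran_def)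
  finally show ?thesis .
qed

lemma pvars_substS_ren: "pvars (substS (Var \<circ> \<rho>) E) = \<rho> ` pvars E"
  unfolding substS_def
  apply (auto simp: vars_ren)
  apply blast+
  done

lemma conjs_good:
  assumes b: "bij \<rho>" and g: "good_mgu \<theta> E"
  shows "good_mgu (conjs \<rho> \<theta>) (substS (Var \<circ> \<rho>) E)"
proof -
  have u: "unifier \<theta> E" using g by (simp add: good_mgu_def is_mgu_def)
  have "unifier (conjs \<rho> \<theta>) (substS (Var \<circ> \<rho>) E)"
    using u by (auto simp: unifier_def substS_def conjs_apply[OF b])
  moreover have "\<exists>\<gamma>. \<tau> = subst_comp (conjs \<rho> \<theta>) \<gamma>" if "unifier \<tau> (substS (Var \<circ> \<rho>) E)" for \<tau>
  proof -
    have "unifier (subst_comp (Var \<circ> \<rho>) \<tau>) E" using that by (simp add: unifier_substS)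
    then obtain \<gamma> where e: "subst_comp (Var \<circ> \<rho>) \<tau> = subst_comp \<theta> \<gamma>" using g by (auto simp: good_mgu_def is_mgu_def)
    have "\<tau> y = subst_comp (conjs \<rho> \<theta>) (subst_comp (Var \<circ> inv \<rho>) \<gamma>) y" for y
    proof -
      have "subst_comp (conjs \<rho> \<theta>) (subst_comp (Var \<circ> inv \<rho>) \<gamma>) y = subst_trm \<gamma> (\<theta> (inv \<rho> y))"
        using subst_ren_then[OF b] by (simp add: subst_comp_def conjs_def)
      also have "\<dots> = subst_comp \<theta> \<gamma> (inv \<rho> y)" by (simp add: subst_comp_def)
      also have "\<dots> = \<tau> (\<rho> (inv \<rho> y))" using fun_cong[OF e, of "inv \<rho> y"] by (simp add: subst_comp_def)
      also have "\<dots> = \<tau> y" using b by (simp add: bij_def surj_f_inv_f)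
      finally show ?thesis by simp
    qed
    then show ?thesis by blast
  qed
  moreover have "relevant (conjs \<rho> \<theta>) (substS (Var \<circ> \<rho>) E)"
    using g unfolding relevant_def good_mgu_def sdom_conjs[OF b] svran_conjs[OF b] pvars_substS_ren
    by blast
  moreover have "idempotent (conjs \<rho> \<theta>)"
  proof -
    have "subst_trm (conjs \<rho> \<theta>) (conjs \<rho> \<theta> y) = conjs \<rho> \<theta> y" for y
    proof -
      have cy: "conjs \<rho> \<theta> y = subst_trm (Var \<circ> \<rho>) (\<theta> (inv \<rho> y))" by (simp add: conjs_def)
      have "subst_trm (conjs \<rho> \<theta>) (conjs \<rho> \<theta> y) = subst_trm (conjs \<rho> \<theta>) (subst_trm (Var \<circ> \<rho>) (\<theta> (inv \<rho> y)))"
        by (simp only: cy)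
      also have "\<dots> = subst_trm (Var \<circ> \<rho>) (subst_trm \<theta> (\<theta> (inv \<rho> y)))" by (rule conjs_apply[OF b])
      also have "\<dots> = subst_trm (Var \<circ> \<rho>) (\<theta> (inv \<rho> y))"
        using g idem_var[of \<theta>] by (simp add: good_mgu_def)
      finally show ?thesis by (simp only: cy)
    qed
    then show ?thesis by (auto simp: idempotent_def subst_comp_def)
  qed
  ultimately show ?thesis by (simp add: good_mgu_def is_mgu_def)
qed

lemma leftmost_nonbasic_subst [simp]: "leftmost_nonbasic (subst_goal \<sigma> G) = leftmost_nonbasic G"
proof (cases G)
  case (Cons a G')
  then show ?thesis by (cases a) auto
qed simp

lemma nonbasic_subst [simp]: "nonbasic (subst_atom \<sigma> a) = nonbasic a"
  by (cases a) auto

lemma rename_clause_Cl: "rename_clause \<rho> (Cl p us B) = Cl p (map (subst_trm (Var \<circ> \<rho>)) us) (subst_goal (Var \<circ> \<rho>) B)"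
  by simp

lemma rename_clause_comp: "rename_clause \<rho> (rename_clause \<rho>c C) = rename_clause (\<rho> \<circ> \<rho>c) C"
proof (cases C)
  case (Cl p us B)
  have e: "subst_comp (Var \<circ> \<rho>c) (Var \<circ> \<rho>) = Var \<circ> (\<rho> \<circ> \<rho>c)" by (auto simp: subst_comp_def)
  have t: "subst_trm (Var \<circ> \<rho>) (subst_trm (Var \<circ> \<rho>c) t) = subst_trm (Var \<circ> (\<rho> \<circ> \<rho>c)) t" for t
    unfolding e[symmetric] by (rule subst_comp_apply[symmetric])
  have g: "subst_goal (Var \<circ> \<rho>) (subst_goal (Var \<circ> \<rho>c) G) = subst_goal (Var \<circ> (\<rho> \<circ> \<rho>c)) G" for G
    unfolding e[symmetric] by (rule subst_goal_comp[symmetric])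
  show ?thesis using Cl by (simp only: rename_clause.simps map_map comp_def[of "subst_trm _" "subst_trm _"] t g)
qed

lemma vars_clause_Cl: "vars_clause (Cl p us B) = (\<Union>u\<in>set us. vars_trm u) \<union> vars_goal B"
  by (simp add: vars_clause_def)

lemma zip_map_ren: "set (zip (map f ts) (map f us)) = (\<lambda>(a, b). (f a, f b)) ` set (zip ts us)"
  by (simp add: zip_map_map)

lemma rstep_ren:
  assumes b: "bij \<rho>" and r: "rstep P A V X \<theta>"
  shows "rstep P (subst_atom (Var \<circ> \<rho>) A) (\<rho> ` V) (subst_goal (Var \<circ> \<rho>) X) (conjs \<rho> \<theta>)"
  using r
proof cases
  case (r_eq t1 t2)
  have "good_mgu (conjs \<rho> \<theta>) (substS (Var \<circ> \<rho>) {(t1, t2)})" by (rule conjs_good[OF b]) (use r_eq in simp)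
  then show ?thesis using r_eq by (auto simp: substS_def intro: rstep.r_eq)
next
  case (r_neq t1 t2)
  have "\<not> (\<exists>\<sigma>. subst_trm \<sigma> (subst_trm (Var \<circ> \<rho>) t1) = subst_trm \<sigma> (subst_trm (Var \<circ> \<rho>) t2))"
    using r_neq by (metis subst_comp_apply)
  then have "rstep P (Neq (subst_trm (Var \<circ> \<rho>) t1) (subst_trm (Var \<circ> \<rho>) t2)) (\<rho> ` V) [] Var"
    by (rule rstep.r_neq)
  moreover have cv: "conjs \<rho> Var = Var" using b by (auto simp: conjs_def bij_def surj_f_inv_f)
  ultimately show ?thesis unfolding r_neq(1,2,3) cv by simp
next
  case (r_res C0 \<rho>c p us B ts)
  let ?r = "Var \<circ> \<rho>"
  have b2: "bij (\<rho> \<circ> \<rho>c)" using b r_res by (simp add: bij_comp)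
  have rc: "rename_clause (\<rho> \<circ> \<rho>c) C0 = Cl p (map (subst_trm ?r) us) (subst_goal ?r B)"
    using r_res rename_clause_comp[of \<rho> \<rho>c C0] by simp
  have inj: "inj \<rho>" using b by (simp add: bij_def)
  have vc: "vars_clause (Cl p (map (subst_trm ?r) us) (subst_goal ?r B)) = \<rho> ` vars_clause (Cl p us B)"
    by (auto simp: vars_clause_Cl vars_ren vars_ren_goal)
  have va: "vars_atom (Pred p (map (subst_trm ?r) ts)) = \<rho> ` vars_atom (Pred p ts)"
    by (auto simp: vars_ren)
  have disj: "vars_clause (Cl p (map (subst_trm ?r) us) (subst_goal ?r B)) \<inter>
      (vars_atom (Pred p (map (subst_trm ?r) ts)) \<union> \<rho> ` V) = {}"
    unfolding vc va image_Un[symmetric] image_Int[OF inj, symmetric] using r_res by simp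
  have g: "good_mgu (conjs \<rho> \<theta>) (set (zip (map (subst_trm ?r) ts) (map (subst_trm ?r) us)))"
    using conjs_good[OF b, of \<theta> "set (zip ts us)"] r_res by (simp add: zip_map_ren substS_def)
  have "rstep P (Pred p (map (subst_trm ?r) ts)) (\<rho> ` V) (subst_goal (conjs \<rho> \<theta>) (subst_goal ?r B)) (conjs \<rho> \<theta>)"
    by (rule rstep.r_res[OF _ b2 rc disj _ g]) (use r_res in auto)
  then show ?thesis using r_res by (simp add: conjs_apply_goal[OF b])
qed

lemma succ_ren: "succ P G n k \<Longrightarrow> bij \<rho> \<Longrightarrow> succ P (subst_goal (Var \<circ> \<rho>) G) n k"
proof (induction rule: succ.induct)
  case s_nil
  then show ?case by (simp add: succ.s_nil)
next
  case (s_step G G' n k)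
  obtain A R where G: "G = A # R" using s_step.hyps(1) by (cases G) (auto simp: step_Nil)
  obtain X \<theta> where r: "rstep P A (vars_goal R) X \<theta>" and G': "G' = X @ subst_goal \<theta> R"
    using s_step.hyps(1) G by (auto simp: step_iff)
  have r2: "rstep P (subst_atom (Var \<circ> \<rho>) A) (vars_goal (subst_goal (Var \<circ> \<rho>) R)) (subst_goal (Var \<circ> \<rho>) X) (conjs \<rho> \<theta>)"
    using rstep_ren[OF s_step.prems r] by (simp add: vars_ren_goal)
  have "subst_goal (Var \<circ> \<rho>) G' = subst_goal (Var \<circ> \<rho>) X @ subst_goal (conjs \<rho> \<theta>) (subst_goal (Var \<circ> \<rho>) R)"
    using G' by (simp add: conjs_apply_goal[OF s_step.prems])
  moreover have "succ P (subst_goal (Var \<circ> \<rho>) G') n k" by (rule s_step.IH[OF s_step.prems])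
  ultimately have sc: "succ P (subst_goal (Var \<circ> \<rho>) X @ subst_goal (conjs \<rho> \<theta>) (subst_goal (Var \<circ> \<rho>) R)) n k"
    by simp
  have e1: "subst_goal (Var \<circ> \<rho>) G = subst_atom (Var \<circ> \<rho>) A # subst_goal (Var \<circ> \<rho>) R"
    unfolding G by (rule subst_goal_Cons)
  have e2: "leftmost_nonbasic G = nonbasic (subst_atom (Var \<circ> \<rho>) A)" using G by simp
  from succ_step[OF r2 sc] show ?case unfolding e1 e2 .
qed

lemma succ_mgu_variant:
  "is_mgu \<phi>1 E \<Longrightarrow> is_mgu \<phi>2 E \<Longrightarrow> succ P (subst_goal \<phi>1 X) n k \<Longrightarrow> succ P (subst_goal \<phi>2 X) n k"
  using mgu_variant[of \<phi>1 E \<phi>2 X] succ_ren by metis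

lemma fresh_inj:
  assumes inf: "infinite (UNIV :: 'a set)" and fS: "finite (S :: 'a set)" and fT: "finite (T :: 'a set)"
  shows "\<exists>g. inj_on g S \<and> g ` S \<inter> T = {}"
proof -
  have "infinite (UNIV - T)" by (rule Diff_infinite_finite[OF fT inf])
  then obtain B where B: "B \<subseteq> UNIV - T" "finite B" "card B = card S"
    using infinite_arbitrarily_large by metis
  then obtain h where "bij_betw h S B" using finite_same_card_bij[OF fS] by metis
  then have "inj_on h S" "h ` S = B" by (auto simp: bij_betw_def)
  then show ?thesis using B(1) by blast
qed

lemma vars_clause_ren:
  "vars_clause (Cl p (map (subst_trm (Var \<circ> \<pi>)) us) (subst_goal (Var \<circ> \<pi>) B)) = \<pi> ` vars_clause (Cl p us B)"
  by (auto simp: vars_clause_Cl vars_ren vars_ren_goal)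

lemma subst_fix_trm: "(\<And>x. x \<in> vars_trm t \<Longrightarrow> \<pi> x = x) \<Longrightarrow> subst_trm (Var \<circ> \<pi>) t = t"
  by (rule trans[OF subst_trm_cong[of t "Var \<circ> \<pi>" Var]]) auto

lemma subst_fix_goal: "(\<And>x. x \<in> vars_goal G \<Longrightarrow> \<pi> x = x) \<Longrightarrow> subst_goal (Var \<circ> \<pi>) G = G"
  by (rule trans[OF subst_goal_cong[of G "Var \<circ> \<pi>" Var]]) auto

lemma rename_fresh:
  fixes P :: "('p, 'f, 'v) program"
  assumes inf: "infinite (UNIV :: 'v set)"
    and C0: "C0 \<in> P" and b: "bij \<rho>" and rc: "rename_clause \<rho> C0 = Cl p us B"
    and disj: "vars_clause (Cl p us B) \<inter> (vars_atom (Pred p ts) \<union> vars_goal R) = {}"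
    and len: "length ts = length us" and g: "good_mgu \<theta> (set (zip ts us))"
    and s: "succ P (subst_goal \<theta> (B @ R)) n k" and fW: "finite W"
  shows "\<exists>\<rho>' us' B' \<theta>'. bij \<rho>' \<and> rename_clause \<rho>' C0 = Cl p us' B' \<and>
     vars_clause (Cl p us' B') \<inter> (vars_atom (Pred p ts) \<union> vars_goal R \<union> W) = {} \<and>
     length ts = length us' \<and> good_mgu \<theta>' (set (zip ts us')) \<and> succ P (subst_goal \<theta>' (B' @ R)) n k"
proof -
  define Cv where "Cv = vars_clause (Cl p us B)"
  define D where "D = vars_atom (Pred p ts) \<union> vars_goal R"
  have fCv: "finite Cv" by (simp add: Cv_def vars_clause_def)
  have fD: "finite D" by (simp add: D_def del: vars_atom.simps)
  obtain g where g1: "inj_on g Cv" and g2: "g ` Cv \<inter> (Cv \<union> D \<union> W) = {}"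
    using fresh_inj[OF inf fCv, of "Cv \<union> D \<union> W"] fCv fD fW by auto
  have CD: "Cv \<inter> D = {}" using disj by (simp add: Cv_def D_def)
  define f where "f = (\<lambda>x. if x \<in> Cv then g x else x)"
  have "inj_on f (Cv \<union> D)"
  proof (rule inj_onI)
    fix x y assume xy: "x \<in> Cv \<union> D" "y \<in> Cv \<union> D" "f x = f y"
    show "x = y"
    proof (cases "x \<in> Cv"; cases "y \<in> Cv")
      assume "x \<in> Cv" "y \<in> Cv" then show ?thesis using xy g1 by (auto simp: f_def inj_on_def)
    next
      assume a: "x \<in> Cv" "y \<notin> Cv"
      then have "f x \<in> g ` Cv" "f y \<in> D" using xy by (auto simp: f_def)
      then show ?thesis using xy g2 by auto
    next
      assume a: "x \<notin> Cv" "y \<in> Cv"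
      then have "f y \<in> g ` Cv" "f x \<in> D" using xy by (auto simp: f_def)
      then show ?thesis using xy g2 by auto
    next
      assume "x \<notin> Cv" "y \<notin> Cv" then show ?thesis using xy by (auto simp: f_def)
    qed
  qed
  then obtain \<pi> where bp: "bij \<pi>" and pf: "\<forall>x\<in>Cv \<union> D. \<pi> x = f x"
    using extend_bij[of "Cv \<union> D" f] fCv fD by auto
  have fixD: "\<pi> x = x" if "x \<in> D" for x using pf that CD by (auto simp: f_def)
  have pCv: "\<pi> ` Cv = g ` Cv" using pf by (auto simp: f_def image_def)
  let ?r = "Var \<circ> \<pi>"
  define us' where "us' = map (subst_trm ?r) us"
  define B' where "B' = subst_goal ?r B"
  have b2: "bij (\<pi> \<circ> \<rho>)" using bp b by (simp add: bij_comp)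
  have rc2: "rename_clause (\<pi> \<circ> \<rho>) C0 = Cl p us' B'"
    using rename_clause_comp[of \<pi> \<rho> C0] rc by (simp add: us'_def B'_def)
  have "vars_clause (Cl p us' B') = \<pi> ` Cv"
    unfolding us'_def B'_def vars_clause_ren Cv_def ..
  then have vc: "vars_clause (Cl p us' B') = g ` Cv" using pCv by simp
  have disj2: "vars_clause (Cl p us' B') \<inter> (vars_atom (Pred p ts) \<union> vars_goal R \<union> W) = {}"
    using g2 unfolding vc D_def by blast
  have len2: "length ts = length us'" using len by (simp add: us'_def)
  have tsfix: "subst_trm ?r t = t" if "t \<in> set ts" for t
    by (rule subst_fix_trm) (use that fixD in \<open>auto simp: D_def\<close>)
  have Rfix: "subst_goal ?r R = R"
    by (rule subst_fix_goal) (use fixD in \<open>auto simp: D_def\<close>)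
  have uth: "map (subst_trm \<theta>) ts = map (subst_trm \<theta>) us"
    using g len unifier_zip[OF len, of \<theta>] by (simp add: good_mgu_def is_mgu_def)
  have conv: "unifier \<tau>'' (set (zip ts us')) \<longleftrightarrow> map (subst_trm \<tau>') ts = map (subst_trm \<tau>') us"
    if "\<tau>'' = (\<lambda>x. \<tau>' (inv \<pi> x))" for \<tau>'' \<tau>'
  proof -
    have a: "map (subst_trm \<tau>'') ts = map (subst_trm \<tau>') ts"
    proof (rule map_cong[OF refl])
      fix t assume "t \<in> set ts"
      then have "subst_trm \<tau>'' t = subst_trm \<tau>'' (subst_trm ?r t)" using tsfix by simp
      also have "\<dots> = subst_trm \<tau>' t" using subst_ren_then[OF bp] that by simp
      finally show "subst_trm \<tau>'' t = subst_trm \<tau>' t" .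
    qed
    have c: "map (subst_trm \<tau>'') us' = map (subst_trm \<tau>') us"
      using that by (simp add: us'_def subst_ren_then[OF bp])
    show ?thesis unfolding unifier_zip[OF len2] a c ..
  qed
  have "unifier (\<lambda>x. \<theta> (inv \<pi> x)) (set (zip ts us'))" using conv[OF refl] uth by simp
  then obtain \<theta>' where g': "good_mgu \<theta>' (set (zip ts us'))"
    using unif_exists by blast
  have m': "is_mgu (subst_comp ?r \<theta>') (set (zip ts us))"
  proof -
    have u': "map (subst_trm \<theta>') ts = map (subst_trm \<theta>') us'"
      using g' unifier_zip[OF len2, of \<theta>'] by (simp add: good_mgu_def is_mgu_def)
    have "map (subst_trm (subst_comp ?r \<theta>')) ts = map (subst_trm \<theta>') ts"
      using tsfix by simp
    moreover have "map (subst_trm (subst_comp ?r \<theta>')) us = map (subst_trm \<theta>') us'"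
      by (simp add: us'_def)
    ultimately have "unifier (subst_comp ?r \<theta>') (set (zip ts us))"
      using u' unifier_zip[OF len] by simp
    moreover have "\<exists>\<gamma>. \<tau>' = subst_comp (subst_comp ?r \<theta>') \<gamma>" if "unifier \<tau>' (set (zip ts us))" for \<tau>'
    proof -
      have "unifier (\<lambda>x. \<tau>' (inv \<pi> x)) (set (zip ts us'))"
        using conv[OF refl, of \<tau>'] that unifier_zip[OF len] by simp
      then obtain \<gamma> where e: "(\<lambda>x. \<tau>' (inv \<pi> x)) = subst_comp \<theta>' \<gamma>"
        using g' by (auto simp: good_mgu_def is_mgu_def)
      have "\<tau>' = subst_comp ?r (\<lambda>x. \<tau>' (inv \<pi> x))"
        using bp by (auto simp: subst_comp_def bij_def)
      also have "\<dots> = subst_comp (subst_comp ?r \<theta>') \<gamma>" unfolding e by (simp add: subst_comp_assoc)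
      finally show ?thesis by blast
    qed
    ultimately show ?thesis by (simp add: is_mgu_def)
  qed
  have "succ P (subst_goal (subst_comp ?r \<theta>') (B @ R)) n k"
    by (rule succ_mgu_variant[OF good_mgu_is_mgu[OF g] m' s])
  then have "succ P (subst_goal \<theta>' (B' @ R)) n k"
    using Rfix by (simp add: B'_def)
  then show ?thesis using b2 rc2 disj2 len2 g' by blast
qed

section \<open>Blocks of equations\<close>

definition mkeqs :: "(('f, 'v) trm \<times> ('f, 'v) trm) list \<Rightarrow> ('p, 'f, 'v) goal" where
  "mkeqs L = map (\<lambda>(s, t). Eq s t) L"

lemma mkeqs_Nil [simp]: "mkeqs [] = []" and mkeqs_Cons [simp]: "mkeqs ((s, t) # L) = Eq s t # mkeqs L"
  by (simp_all add: mkeqs_def)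

lemma subst_mkeqs [simp]: "subst_goal \<sigma> (mkeqs L) = mkeqs (substP \<sigma> L)"
  by (induction L) (auto simp: substP_def)

lemma vars_mkeqs [simp]: "vars_goal (mkeqs L) = pvars (set L)"
  by (induction L) auto

lemma length_substP [simp]: "length (substP \<sigma> L) = length L"
  by (simp add: substP_def)

lemma substP_Cons [simp]: "substP \<sigma> ((s, t) # L) = (subst_trm \<sigma> s, subst_trm \<sigma> t) # substP \<sigma> L"
  by (simp add: substP_def)

lemma pvars_substP_le: "relv \<sigma> V \<Longrightarrow> pvars (set (substP \<sigma> L)) \<subseteq> pvars (set L) \<union> V"
  unfolding pvars_substP using relv_vars[of \<sigma> V] by blast

lemma unifier_empty [simp]: "unifier \<sigma> {}"
  by (simp add: unifier_def)

lemma is_mgu_Var_empty: "is_mgu Var {}"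
  by (rule good_mgu_is_mgu[OF good_mgu_Var_empty])

lemma eqs_fwd:
  "succ P (mkeqs L @ R) n k \<Longrightarrow> length L \<le> n \<and>
     (\<exists>\<sigma>. is_mgu \<sigma> (set L) \<and> relv \<sigma> (pvars (set L)) \<and> succ P (subst_goal \<sigma> R) (n - length L) k)"
proof (induction "length L" arbitrary: L R n k)
  case 0
  then show ?case using is_mgu_Var_empty relv_Var[of "{}"] by auto
next
  case (Suc N)
  then obtain p L' where L: "L = p # L'" by (cases L) auto
  obtain s t where p: "p = (s, t)" by (cases p)
  note CP = Suc.prems[unfolded L]
  from CP obtain n' k' X \<theta> where n: "n = Suc n'" and k: "k = k'"
    and r: "rstep P (Eq s t) (vars_goal (mkeqs L' @ R)) X \<theta>"
    and s: "succ P (X @ subst_goal \<theta> (mkeqs L' @ R)) n' k'"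
    unfolding p by (auto simp: succ_Cons)
  from r have X: "X = []" and g: "good_mgu \<theta> {(s, t)}" by (auto elim: rstep.cases)
  from s X have "succ P (mkeqs (substP \<theta> L') @ subst_goal \<theta> R) n' k'" by simp
  from Suc.hyps(1)[of "substP \<theta> L'", OF _ this] obtain \<sigma>2 where len: "length L' \<le> n'" and m2: "is_mgu \<sigma>2 (set (substP \<theta> L'))"
    and rv2: "relv \<sigma>2 (pvars (set (substP \<theta> L')))" and s2: "succ P (subst_goal \<sigma>2 (subst_goal \<theta> R)) (n' - length L') k'"
    using Suc.hyps(2) L by auto
  have m: "is_mgu (subst_comp \<theta> \<sigma>2) ({(s, t)} \<union> set L')"
    by (rule mgu_comp[OF good_mgu_is_mgu[OF g]]) (use m2 in \<open>simp add: set_substP\<close>)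
  have rv1: "relv \<theta> (pvars {(s, t)})" by (rule good_mgu_relv[OF g])
  have "pvars (set (substP \<theta> L')) \<subseteq> pvars (set L') \<union> pvars {(s, t)}"
    by (rule pvars_substP_le[OF rv1])
  then have "relv (subst_comp \<theta> \<sigma>2) (pvars {(s, t)} \<union> (pvars (set L') \<union> pvars {(s, t)}))"
    using relv_comp[OF rv1 relv_mono[OF rv2]] by blast
  then have rv: "relv (subst_comp \<theta> \<sigma>2) (pvars (set (p # L')))"
    by (rule relv_mono) (auto simp: p)
  show ?case using len m rv s2 n k p Suc.hyps(2) L by (auto intro!: exI[of _ "subst_comp \<theta> \<sigma>2"])
qed

lemma eqs_bwd:
  "is_mgu \<sigma> (set L) \<Longrightarrow> succ P (subst_goal \<sigma> R) m k \<Longrightarrow> succ P (mkeqs L @ R) (m + length L) k"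
proof (induction "length L" arbitrary: L \<sigma> R m)
  case 0
  have "succ P (subst_goal Var R) m k"
    by (rule succ_mgu_variant[OF _ is_mgu_Var_empty 0(3)]) (use 0 in simp)
  then show ?case using 0 by simp
next
  case (Suc N)
  then obtain p L' where L: "L = p # L'" by (cases L) auto
  obtain s t where p: "p = (s, t)" by (cases p)
  note CP = Suc.prems[unfolded L]
  have u: "unifier \<sigma> ({(s, t)} \<union> set L')" using CP(1) p by (simp add: is_mgu_def)
  then have "unifier \<sigma> (set [(s, t)])" by (simp add: unifier_union)
  then obtain \<theta> where g: "good_mgu \<theta> {(s, t)}" using unif_exists by fastforce
  obtain \<sigma>2 where g2: "good_mgu \<sigma>2 (set (substP \<theta> L'))"
    using unif_after[OF good_mgu_is_mgu[OF g] u] by blast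
  have m: "is_mgu (subst_comp \<theta> \<sigma>2) ({(s, t)} \<union> set L')"
    by (rule mgu_comp[OF good_mgu_is_mgu[OF g]]) (use g2 in \<open>simp add: set_substP good_mgu_def\<close>)
  have "succ P (subst_goal (subst_comp \<theta> \<sigma>2) R) m k"
    by (rule succ_mgu_variant[OF _ m CP(2)]) (use CP(1) p in simp)
  then have "succ P (subst_goal \<sigma>2 (subst_goal \<theta> R)) m k" by simp
  from Suc.hyps(1)[of "substP \<theta> L'", OF _ good_mgu_is_mgu[OF g2] this] Suc.hyps(2) L
  have "succ P (mkeqs (substP \<theta> L') @ subst_goal \<theta> R) (m + length L') k" by simp
  then have "succ P ([] @ subst_goal \<theta> (mkeqs L' @ R)) (m + length L') k" by simp
  from succ_step[OF rstep.r_eq[OF g] this] show ?case using p L by simp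
qed

definition allcons :: "'p mode \<Rightarrow> ('p, 'f, 'v) program \<Rightarrow> ('p, 'f, 'v) goal \<Rightarrow> bool" where
  "allcons M P G \<longleftrightarrow> (\<forall>ds. derivation P ds \<and> hd ds = G \<longrightarrow> consistent M ds)"

lemma allcons_step:
  assumes a: "allcons M P G" and s: "step P G G'"
  shows "allcons M P G'"
  unfolding allcons_def
proof (intro allI impI)
  fix ds assume d: "derivation P ds \<and> hd ds = G'"
  then have ne: "ds \<noteq> []" by (simp add: derivation_def)
  have "derivation P (G # ds)"
    unfolding derivation_def
  proof (intro conjI allI impI)
    fix i assume i: "Suc i < length (G # ds)"
    show "step P ((G # ds) ! i) ((G # ds) ! Suc i)"
    proof (cases i)
      case 0
      then show ?thesis using s d ne by (simp add: hd_conv_nth)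
    next
      case (Suc j)
      then show ?thesis using d i by (simp add: derivation_def)
    qed
  qed simp
  then have "consistent M (G # ds)" using a by (simp add: allcons_def)
  then show "consistent M ds"
    unfolding consistent_def
  proof (intro allI impI)
    fix i A K
    assume c: "\<forall>i A K. Suc i < length (G # ds) \<and> (G # ds) ! i = A # K \<and> nonbasic A \<longrightarrow> sat_atom M A"
      and h: "Suc i < length ds \<and> ds ! i = A # K \<and> nonbasic A"
    then show "sat_atom M A" using c[rule_format, of "Suc i" A K] by simp
  qed
qed

lemma allcons_sat:
  assumes a: "allcons M P (A # K)" and s: "step P (A # K) G'" and nb: "nonbasic A"
  shows "sat_atom M A"
proof -
  have "derivation P [A # K, G']" using s by (auto simp: derivation_def less_Suc_eq)
  then have "consistent M [A # K, G']" using a by (simp add: allcons_def)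
  then show ?thesis using nb unfolding consistent_def by (metis One_nat_def nth_Cons_0 length_Cons list.size(3) lessI)
qed

lemma untouched_Var: "untouched Var x"
  by (simp add: untouched_def)

lemma untouched_fix_trm: "(\<And>x. x \<in> vars_trm t \<Longrightarrow> untouched \<theta> x) \<Longrightarrow> subst_trm \<theta> t = t"
  by (rule trans[OF subst_trm_cong[of t \<theta> Var]]) (auto simp: untouched_def)

lemma rstep_untouched:
  assumes r: "rstep P A V X \<theta>" and xA: "x \<notin> vars_atom A" and xV: "x \<in> V"
  shows "untouched \<theta> x \<and> x \<notin> vars_goal X"
  using r
proof cases
  case (r_eq t1 t2)
  have "relv \<theta> (pvars {(t1, t2)})" by (rule good_mgu_relv) (use r_eq in simp)
  then show ?thesis using r_eq xA by (auto intro: relv_untouched)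
next
  case (r_neq t1 t2)
  then show ?thesis by (simp add: untouched_Var)
next
  case (r_res C0 \<rho> p us B ts)
  have rv: "relv \<theta> (pvars (set (zip ts us)))" by (rule good_mgu_relv) (use r_res in simp)
  have "x \<notin> pvars (set (zip ts us))"
    using r_res xA xV by (auto simp: pvars_zip vars_clause_Cl)
  then have u: "untouched \<theta> x" by (rule relv_untouched[OF rv])
  have "x \<notin> vars_goal B" using r_res xV by (auto simp: vars_clause_Cl)
  then show ?thesis using u r_res by (simp add: untouched_vars_goal[OF u])
qed

lemma subst_atom_Neq_inv: "subst_atom \<theta> b = Neq t1 t2 \<Longrightarrow> \<exists>u1 u2. b = Neq u1 u2 \<and> t1 = subst_trm \<theta> u1 \<and> t2 = subst_trm \<theta> u2"
  by (cases b) auto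

lemma map_split_Neq:
  assumes "map (subst_atom \<theta>) G = A' @ Neq t1 t2 # B'"
  shows "\<exists>A0 u1 u2 B0. G = A0 @ Neq u1 u2 # B0 \<and> A' = map (subst_atom \<theta>) A0 \<and> B' = map (subst_atom \<theta>) B0 \<and>
     t1 = subst_trm \<theta> u1 \<and> t2 = subst_trm \<theta> u2"
proof -
  from assms obtain A0 R where "G = A0 @ R" "map (subst_atom \<theta>) A0 = A'" "map (subst_atom \<theta>) R = Neq t1 t2 # B'"
    by (auto simp: map_eq_append_conv)
  moreover from this(3) obtain b B0 where "R = b # B0" "subst_atom \<theta> b = Neq t1 t2" "map (subst_atom \<theta>) B0 = B'"
    by (auto simp: map_eq_Cons_conv)
  ultimately show ?thesis using subst_atom_Neq_inv by fastforce
qed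

definition iso :: "('p, 'f, 'v) goal \<Rightarrow> ('p, 'f, 'v) goal \<Rightarrow> (('f, 'v) trm \<times> ('f, 'v) trm) list \<Rightarrow> ('p, 'f, 'v) goal \<Rightarrow> bool" where
  "iso G0 G1 L G2 \<longleftrightarrow> (\<forall>A t1 t2 B. G1 = A @ Neq t1 t2 # B \<longrightarrow>
      (vars_trm t1 \<union> vars_trm t2) \<inter> (vars_goal (G0 @ A @ B @ G2) \<union> pvars (set L)) = {})"

lemma iso_noneq: "\<forall>a\<in>set G1. \<not> is_neq a \<Longrightarrow> iso G0 G1 L G2"
  by (auto simp: iso_def)

lemma pvars_subst_untouched: "untouched \<theta> x \<Longrightarrow> x \<in> pvars (set (substP \<theta> L)) \<longleftrightarrow> x \<in> pvars (set L)"
  using untouched_vars_goal[of \<theta> x "mkeqs L"] by simp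

lemma iso_G0_step:
  assumes iso: "iso (A # G0') G1 L G2" and r: "rstep P A V X \<theta>" and V: "vars_goal G1 \<subseteq> V"
  shows "iso (X @ subst_goal \<theta> G0') (subst_goal \<theta> G1) (substP \<theta> L) (subst_goal \<theta> G2)"
  unfolding iso_def
proof (intro allI impI)
  fix A' t1' t2' B'
  assume "subst_goal \<theta> G1 = A' @ Neq t1' t2' # B'"
  then have "map (subst_atom \<theta>) G1 = A' @ Neq t1' t2' # B'" by (simp add: subst_goal_def)
  from map_split_Neq[OF this] obtain A0 u1 u2 B0 where G1: "G1 = A0 @ Neq u1 u2 # B0" and A'm: "A' = map (subst_atom \<theta>) A0"
    and B'm: "B' = map (subst_atom \<theta>) B0" and t: "t1' = subst_trm \<theta> u1" "t2' = subst_trm \<theta> u2"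
    by blast
  have A': "A' = subst_goal \<theta> A0" and B': "B' = subst_goal \<theta> B0" using A'm B'm by (simp_all add: subst_goal_def)
  have dj: "(vars_trm u1 \<union> vars_trm u2) \<inter> (vars_goal ((A # G0') @ A0 @ B0 @ G2) \<union> pvars (set L)) = {}"
    using iso G1 by (simp add: iso_def)
  have ut: "untouched \<theta> x \<and> x \<notin> vars_goal X" if "x \<in> vars_trm u1 \<union> vars_trm u2" for x
  proof -
    have xA: "x \<notin> vars_atom A" using that dj by auto
    have xV: "x \<in> V" using that V G1 by auto
    show ?thesis by (rule rstep_untouched[OF r xA xV])
  qed
  have e1: "t1' = u1" using t ut by (auto intro!: untouched_fix_trm)
  have e2: "t2' = u2" using t ut by (auto intro!: untouched_fix_trm)
  show "(vars_trm t1' \<union> vars_trm t2') \<inter> (vars_goal ((X @ subst_goal \<theta> G0') @ A' @ B' @ subst_goal \<theta> G2) \<union>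
      pvars (set (substP \<theta> L))) = {}"
  proof -
    { fix x assume x: "x \<in> vars_trm u1 \<union> vars_trm u2"
      then have u: "untouched \<theta> x" and xX: "x \<notin> vars_goal X" using ut by auto
      have "x \<notin> vars_goal (subst_goal \<theta> (G0' @ A0 @ B0 @ G2))"
        using x dj by (auto simp add: untouched_vars_goal[OF u])
      moreover have "x \<notin> pvars (set (substP \<theta> L))"
      proof -
        have "x \<notin> pvars (set L)" using x dj by auto
        then show ?thesis using pvars_subst_untouched[OF u, of L] by blast
      qed
      ultimately have "x \<notin> vars_goal ((X @ subst_goal \<theta> G0') @ A' @ B' @ subst_goal \<theta> G2) \<union> pvars (set (substP \<theta> L))"
        using xX A' B' by simp }
    then show ?thesis using e1 e2 by blast
  qed
qed

lemma input_var_ren: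
  assumes "y \<in> input_vars M (Pred p us0)"
  shows "\<exists>j<length us0. (case M p of Some ms \<Rightarrow> j < length ms \<and> ms ! j | None \<Rightarrow> False) \<and>
    \<rho> y \<in> vars_trm (map (subst_trm (Var \<circ> \<rho>)) us0 ! j)"
  using assms by (auto simp: vars_ren)

lemma safe_renamed_neq:
  assumes sc: "safe_clause M C0" and b: "bij \<rho>" and rc: "rename_clause \<rho> C0 = Cl p us B"
    and B: "B = B1 @ Neq u1 u2 # B2" and x: "x \<in> vars_trm u1 \<union> vars_trm u2"
  shows "(\<exists>j<length us. (case M p of Some ms \<Rightarrow> j < length ms \<and> ms ! j | None \<Rightarrow> False) \<and> x \<in> vars_trm (us ! j))
     \<or> (x \<notin> (\<Union>u\<in>set us. vars_trm u) \<and> x \<notin> vars_goal B1 \<and> x \<notin> vars_goal B2)"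
proof -
  obtain p0 us0 B0 where C0: "C0 = Cl p0 us0 B0" by (cases C0)
  have p0: "p0 = p" and us: "us = map (subst_trm (Var \<circ> \<rho>)) us0" and B0: "B = subst_goal (Var \<circ> \<rho>) B0"
    using rc C0 by auto
  have "map (subst_atom (Var \<circ> \<rho>)) B0 = B1 @ Neq u1 u2 # B2" using B0 B by (simp add: subst_goal_def)
  from map_split_Neq[OF this] obtain C1 s1 s2 C2 where B0s: "B0 = C1 @ Neq s1 s2 # C2"
    and C1: "B1 = map (subst_atom (Var \<circ> \<rho>)) C1" and C2: "B2 = map (subst_atom (Var \<circ> \<rho>)) C2"
    and u: "u1 = subst_trm (Var \<circ> \<rho>) s1" "u2 = subst_trm (Var \<circ> \<rho>) s2" by blast
  obtain y where y: "y \<in> vars_trm s1 \<union> vars_trm s2" and xy: "x = \<rho> y" using x u by (auto simp: vars_ren)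
  define i where "i = length C1"
  have i: "i < length (bd_cl C0)" "bd_cl C0 ! i = Neq s1 s2" using B0s C0 by (auto simp: i_def)
  have "y \<in> input_vars M (hd_cl C0) \<or> local_var_of C0 i y"
    using sc i y unfolding safe_clause_def by blast
  then show ?thesis
  proof
    assume "y \<in> input_vars M (hd_cl C0)"
    then show ?thesis using C0 p0 us xy input_var_ren[of y M p us0 \<rho>] by auto
  next
    assume "local_var_of C0 i y"
    then have ny: "y \<notin> (\<Union>u\<in>set us0. vars_trm u)" "y \<notin> vars_goal C1" "y \<notin> vars_goal C2"
      using C0 B0s by (auto simp: local_var_of_def i_def)
    have inj: "inj \<rho>" using b by (simp add: bij_def)
    have "x \<notin> (\<Union>u\<in>set us. vars_trm u)"
      using ny(1) xy inj by (auto simp: us vars_ren inj_eq)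
    moreover have "x \<notin> vars_goal B1"
      using ny(2) xy inj vars_ren_goal[of \<rho> C1] by (auto simp: C1 subst_goal_def inj_eq)
    moreover have "x \<notin> vars_goal B2"
      using ny(3) xy inj vars_ren_goal[of \<rho> C2] by (auto simp: C2 subst_goal_def inj_eq)
    ultimately show ?thesis by blast
  qed
qed

lemma input_ground:
  assumes sat: "sat_atom M (Pred p ts)" and len: "length ts = length us"
    and g: "good_mgu \<theta> (set (zip ts us))"
    and j: "j < length us" "(case M p of Some ms \<Rightarrow> j < length ms \<and> ms ! j | None \<Rightarrow> False)"
    and z: "z \<in> vars_trm (us ! j)"
  shows "vars_trm (\<theta> z) = {}"
proof -
  obtain ms where ms: "M p = Some ms" "j < length ms" "ms ! j" using j(2) by (cases "M p") auto
  have gr: "ground (ts ! j)" using sat ms j(1) len by auto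
  have "map (subst_trm \<theta>) ts = map (subst_trm \<theta>) us"
    using g unifier_zip[OF len, of \<theta>] by (simp add: good_mgu_def is_mgu_def)
  then have "subst_trm \<theta> (ts ! j) = subst_trm \<theta> (us ! j)"
    using j(1) len by (metis nth_map)
  then have "subst_trm \<theta> (us ! j) = ts ! j" using ground_subst[OF gr] by simp
  then have "vars_trm (subst_trm \<theta> (us ! j)) = {}" using gr by (simp add: ground_def)
  then show ?thesis using z by (auto simp: vars_subst_trm)
qed

lemma iso_G1_step:
  assumes iso: "iso [] (A # G1') L G2"
    and r: "rstep P A (vars_goal (G1' @ mkeqs L @ G2)) X \<theta>"
    and safe: "safe_prog M P"
    and sat: "nonbasic A \<Longrightarrow> sat_atom M A"
  shows "iso [] (X @ subst_goal \<theta> G1') (substP \<theta> L) (subst_goal \<theta> G2)"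
  unfolding iso_def
proof (intro allI impI)
  define V where "V = vars_goal (G1' @ mkeqs L @ G2)"
  fix A' t1' t2' B'
  assume eq: "X @ subst_goal \<theta> G1' = A' @ Neq t1' t2' # B'"
  let ?Z = "vars_goal (subst_goal \<theta> G2) \<union> pvars (set (substP \<theta> L))"
  have inY: "(vars_trm t1' \<union> vars_trm t2') \<inter> (vars_goal (X @ A2 @ B2 @ subst_goal \<theta> G2) \<union> pvars (set (substP \<theta> L))) = {}"
    if Y: "subst_goal \<theta> G1' = A2 @ Neq t1' t2' # B2" for A2 B2
  proof -
    have "map (subst_atom \<theta>) G1' = A2 @ Neq t1' t2' # B2" using Y by (simp add: subst_goal_def)
    from map_split_Neq[OF this] obtain A0 u1 u2 B0 where G1': "G1' = A0 @ Neq u1 u2 # B0"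
      and A2: "A2 = map (subst_atom \<theta>) A0" and B2: "B2 = map (subst_atom \<theta>) B0"
      and t: "t1' = subst_trm \<theta> u1" "t2' = subst_trm \<theta> u2" by blast
    have "A # G1' = (A # A0) @ Neq u1 u2 # B0" using G1' by simp
    from iso[unfolded iso_def, rule_format, OF this]
    have dj: "(vars_trm u1 \<union> vars_trm u2) \<inter> (vars_goal ([] @ (A # A0) @ B0 @ G2) \<union> pvars (set L)) = {}" .
    have ut: "untouched \<theta> x \<and> x \<notin> vars_goal X" if "x \<in> vars_trm u1 \<union> vars_trm u2" for x
    proof -
      have xA: "x \<notin> vars_atom A" using that dj by auto
      have xV: "x \<in> vars_goal (G1' @ mkeqs L @ G2)" using that G1' by auto
      show ?thesis by (rule rstep_untouched[OF r xA xV])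
    qed
    have e1: "t1' = u1" using t ut by (auto intro!: untouched_fix_trm)
    have e2: "t2' = u2" using t ut by (auto intro!: untouched_fix_trm)
    { fix x assume x: "x \<in> vars_trm u1 \<union> vars_trm u2"
      then have u: "untouched \<theta> x" and xX: "x \<notin> vars_goal X" using ut by auto
      have "x \<notin> vars_goal (subst_goal \<theta> (A0 @ B0 @ G2))"
        using x dj by (auto simp add: untouched_vars_goal[OF u])
      moreover have "x \<notin> pvars (set (substP \<theta> L))"
      proof -
        have "x \<notin> pvars (set L)" using x dj by auto
        then show ?thesis using pvars_subst_untouched[OF u, of L] by blast
      qed
      ultimately have "x \<notin> vars_goal (X @ A2 @ B2 @ subst_goal \<theta> G2) \<union> pvars (set (substP \<theta> L))"
        using xX A2 B2 by (simp add: subst_goal_def) }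
    then show ?thesis using e1 e2 by blast
  qed
  have inX: "(vars_trm t1' \<union> vars_trm t2') \<inter> (vars_goal (A2 @ X2 @ subst_goal \<theta> G1' @ subst_goal \<theta> G2) \<union> pvars (set (substP \<theta> L))) = {}"
    if XX: "X = A2 @ Neq t1' t2' # X2" for A2 X2
    using r
  proof cases
    case (r_eq t1 t2) then show ?thesis using XX by simp
  next
    case (r_neq t1 t2) then show ?thesis using XX by simp
  next
    case (r_res C0 \<rho> p us B ts)
    have satA: "sat_atom M (Pred p ts)" using sat r_res by simp
    have "map (subst_atom \<theta>) B = A2 @ Neq t1' t2' # X2" using XX r_res by (simp add: subst_goal_def)
    from map_split_Neq[OF this] obtain B1 u1 u2 B2 where B: "B = B1 @ Neq u1 u2 # B2"
      and A2: "A2 = map (subst_atom \<theta>) B1" and X2: "X2 = map (subst_atom \<theta>) B2"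
      and t: "t1' = subst_trm \<theta> u1" "t2' = subst_trm \<theta> u2" by blast
    have sc: "safe_clause M C0" using safe r_res by (simp add: safe_prog_def)
    have rv: "relv \<theta> (pvars (set (zip ts us)))" by (rule good_mgu_relv) (use r_res in simp)
    have dis: "vars_clause (Cl p us B) \<inter> (vars_atom (Pred p ts) \<union> V) = {}" using r_res by (simp add: V_def)
    have cases_z: "vars_trm (\<theta> z) = {} \<or> (untouched \<theta> z \<and> z \<notin> (\<Union>u\<in>set us. vars_trm u) \<and>
        z \<notin> vars_goal B1 \<and> z \<notin> vars_goal B2 \<and> z \<notin> V)"
      if z: "z \<in> vars_trm u1 \<union> vars_trm u2" for z
    proof -
      from safe_renamed_neq[OF sc r_res(4) r_res(5) B z] show ?thesis
      proof
        assume "\<exists>j<length us. (case M p of Some ms \<Rightarrow> j < length ms \<and> ms ! j | None \<Rightarrow> False) \<and> z \<in> vars_trm (us ! j)"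
        then obtain j where "j < length us" "(case M p of Some ms \<Rightarrow> j < length ms \<and> ms ! j | None \<Rightarrow> False)" "z \<in> vars_trm (us ! j)"
          by blast
        from input_ground[OF satA r_res(7) r_res(8) this] show ?thesis by blast
      next
        assume loc: "z \<notin> (\<Union>u\<in>set us. vars_trm u) \<and> z \<notin> vars_goal B1 \<and> z \<notin> vars_goal B2"
        have "z \<in> vars_clause (Cl p us B)" using z B by (auto simp: vars_clause_Cl)
        then have zn: "z \<notin> vars_atom (Pred p ts)" "z \<notin> V" using dis by auto
        have "z \<notin> pvars (set (zip ts us))" using zn(1) loc r_res(7) by (auto simp: pvars_zip)
        then have "untouched \<theta> z" by (rule relv_untouched[OF rv])
        then show ?thesis using loc zn by blast
      qed
    qed
    { fix y assume y: "y \<in> vars_trm t1' \<union> vars_trm t2'"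
      then obtain z where z: "z \<in> vars_trm u1 \<union> vars_trm u2" and yz: "y \<in> vars_trm (\<theta> z)"
        using t by (auto simp: vars_subst_trm)
      have loc: "untouched \<theta> z \<and> z \<notin> vars_goal B1 \<and> z \<notin> vars_goal B2 \<and> z \<notin> V"
        using cases_z[OF z] yz by auto
      then have yz': "y = z" using yz by (auto simp: untouched_def)
      have u: "untouched \<theta> y" using loc yz' by simp
      have uz: "untouched \<theta> z" using loc by simp
      have "z \<notin> vars_goal (subst_goal \<theta> (B1 @ B2 @ G1' @ G2))"
        using loc by (auto simp add: untouched_vars_goal[OF uz] V_def)
      then have "y \<notin> vars_goal (subst_goal \<theta> (B1 @ B2 @ G1' @ G2))" using yz' by simp
      moreover have "y \<notin> pvars (set (substP \<theta> L))"
      proof -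
        have "y \<notin> pvars (set L)" using loc yz' by (auto simp: V_def)
        then show ?thesis using pvars_subst_untouched[OF u, of L] by blast
      qed
      ultimately have "y \<notin> vars_goal (A2 @ X2 @ subst_goal \<theta> G1' @ subst_goal \<theta> G2) \<union> pvars (set (substP \<theta> L))"
        using A2 X2 by (simp add: subst_goal_def) }
    then show ?thesis by blast
  qed
  from eq obtain us where "X = A' @ us \<and> us @ subst_goal \<theta> G1' = Neq t1' t2' # B' \<or>
      X @ us = A' \<and> subst_goal \<theta> G1' = us @ Neq t1' t2' # B'"
    unfolding append_eq_append_conv2 by blast
  then show "(vars_trm t1' \<union> vars_trm t2') \<inter> (vars_goal ([] @ A' @ B' @ subst_goal \<theta> G2) \<union> pvars (set (substP \<theta> L))) = {}"
  proof
    assume a: "X = A' @ us \<and> us @ subst_goal \<theta> G1' = Neq t1' t2' # B'"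
    show ?thesis
    proof (cases us)
      case Nil
      then show ?thesis using a inY[of "[]" B'] by simp
    next
      case (Cons n us')
      then have "X = A' @ Neq t1' t2' # us'" "B' = us' @ subst_goal \<theta> G1'" using a by auto
      then show ?thesis using inX[of A' us'] by simp
    qed
  next
    assume a: "X @ us = A' \<and> subst_goal \<theta> G1' = us @ Neq t1' t2' # B'"
    then show ?thesis using inY[of us B'] by auto
  qed
qed

lemma substP_zip: "substP \<sigma> (zip a b) = zip (map (subst_trm \<sigma>) a) (map (subst_trm \<sigma>) b)"
  by (simp add: substP_def zip_map_map)

lemma substP_Nil [simp]: "substP \<sigma> [] = []"
  by (simp add: substP_def)

lemma substP_Var [simp]: "substP Var L = L"
  by (simp add: substP_def case_prod_beta)

lemma mgu_set_eq: "is_mgu \<theta> E \<Longrightarrow> E = E' \<Longrightarrow> is_mgu \<theta> E'"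
  by simp

lemma mainF:
  fixes P :: "('p, 'f, 'v) program"
  assumes safe: "safe_prog M P"
  shows "succ P (G0 @ G1 @ mkeqs L @ G2) n k \<Longrightarrow> iso G0 G1 L G2 \<Longrightarrow> allcons M P (G0 @ G1) \<Longrightarrow>
    succ P (G0 @ mkeqs L @ G1 @ G2) n k"
proof (induction n arbitrary: G0 G1 L G2 k rule: less_induct)
  case (less n)
  show ?case
  proof (cases G0)
    case (Cons A G0')
    from less.prems(1) obtain n' k' X \<theta> where n: "n = Suc n'" and k: "k = k' + (if nonbasic A then 1 else 0)"
      and r: "rstep P A (vars_goal (G0' @ G1 @ mkeqs L @ G2)) X \<theta>"
      and s: "succ P (X @ subst_goal \<theta> (G0' @ G1 @ mkeqs L @ G2)) n' k'"
      unfolding Cons by (auto simp: succ_Cons)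
    have s': "succ P ((X @ subst_goal \<theta> G0') @ subst_goal \<theta> G1 @ mkeqs (substP \<theta> L) @ subst_goal \<theta> G2) n' k'"
      using s by simp
    have iso': "iso (X @ subst_goal \<theta> G0') (subst_goal \<theta> G1) (substP \<theta> L) (subst_goal \<theta> G2)"
      by (rule iso_G0_step[OF less.prems(2)[unfolded Cons] r]) auto
    have "rstep P A (vars_goal (G0' @ G1)) X \<theta>" using r by (rule rstep_mono) auto
    then have st: "step P (A # G0' @ G1) (X @ subst_goal \<theta> (G0' @ G1))"
      unfolding step_iff by blast
    have ac': "allcons M P ((X @ subst_goal \<theta> G0') @ subst_goal \<theta> G1)"
      using allcons_step[OF less.prems(3)[unfolded Cons append_Cons] st] by simp
    have "succ P ((X @ subst_goal \<theta> G0') @ mkeqs (substP \<theta> L) @ subst_goal \<theta> G1 @ subst_goal \<theta> G2) n' k'"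
      by (rule less.IH[OF _ s' iso' ac']) (simp add: n)
    then have s2: "succ P (X @ subst_goal \<theta> (G0' @ mkeqs L @ G1 @ G2)) n' k'" by simp
    have r2: "rstep P A (vars_goal (G0' @ mkeqs L @ G1 @ G2)) X \<theta>"
      using r by (rule rstep_mono) auto
    from succ_step[OF r2 s2] show ?thesis using Cons n k by simp
  next
    case G0: Nil
    show ?thesis
    proof (cases G1)
      case Nil
      then show ?thesis using less.prems(1) G0 by simp
    next
      case (Cons A G1')
      from less.prems(1) obtain n' k' X \<theta> where n: "n = Suc n'" and k: "k = k' + (if nonbasic A then 1 else 0)"
        and r: "rstep P A (vars_goal (G1' @ mkeqs L @ G2)) X \<theta>"
        and s: "succ P (X @ subst_goal \<theta> (G1' @ mkeqs L @ G2)) n' k'"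
        unfolding G0 Cons by (auto simp: succ_Cons)
      have st: "step P (A # G1') (X @ subst_goal \<theta> G1')"
        unfolding step_iff using rstep_mono[OF r] by auto
      have ac1: "allcons M P (A # G1')" using less.prems(3) G0 Cons by simp
      have sat: "nonbasic A \<Longrightarrow> sat_atom M A" using allcons_sat[OF ac1 st] .
      have isoA: "iso [] (A # G1') L G2" using less.prems(2) G0 Cons by simp
      have iso': "iso [] (X @ subst_goal \<theta> G1') (substP \<theta> L) (subst_goal \<theta> G2)"
        by (rule iso_G1_step[OF isoA r safe sat])
      have ac': "allcons M P ([] @ X @ subst_goal \<theta> G1')" using allcons_step[OF ac1 st] by simp
      have s': "succ P ([] @ (X @ subst_goal \<theta> G1') @ mkeqs (substP \<theta> L) @ subst_goal \<theta> G2) n' k'"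
        using s by simp
      have "succ P ([] @ mkeqs (substP \<theta> L) @ (X @ subst_goal \<theta> G1') @ subst_goal \<theta> G2) n' k'"
        by (rule less.IH[OF _ s' iso' ac']) (simp add: n)
      then have "succ P (mkeqs (substP \<theta> L) @ X @ subst_goal \<theta> G1' @ subst_goal \<theta> G2) n' k'" by simp
      from eqs_fwd[OF this] obtain \<sigma>' where lenL: "length L \<le> n'" and m': "is_mgu \<sigma>' (set (substP \<theta> L))"
        and s3: "succ P (subst_goal \<sigma>' (X @ subst_goal \<theta> G1' @ subst_goal \<theta> G2)) (n' - length L) k'"
        by auto
      have uL: "unifier (subst_comp \<theta> \<sigma>') (set L)"
        using is_mgu_unifier[OF m'] by (simp add: unifier_substP)
      obtain \<sigma> where g\<sigma>: "good_mgu \<sigma> (set L)" using unif_exists[OF uL] by blast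
      have rv\<sigma>: "relv \<sigma> (pvars (set L))" by (rule good_mgu_relv[OF g\<sigma>])
      have m\<sigma>: "is_mgu \<sigma> (set L)" by (rule good_mgu_is_mgu[OF g\<sigma>])
      have suff: "succ P (subst_goal \<sigma> (A # G1' @ G2)) (Suc (n' - length L)) k \<Longrightarrow> ?thesis"
      proof -
        assume "succ P (subst_goal \<sigma> (A # G1' @ G2)) (Suc (n' - length L)) k"
        from eqs_bwd[OF m\<sigma> this] have "succ P (mkeqs L @ A # G1' @ G2) (Suc (n' - length L) + length L) k" .
        moreover have "Suc (n' - length L) + length L = n" using n lenL by simp
        ultimately show ?thesis using G0 Cons by simp
      qed
      show ?thesis
        using r
      proof cases
        case (r_eq t1 t2)
        have g\<theta>: "good_mgu \<theta> {(t1, t2)}" using r_eq by simp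
        have mc: "is_mgu (subst_comp \<theta> \<sigma>') ({(t1, t2)} \<union> set L)"
          by (rule mgu_comp[OF good_mgu_is_mgu[OF g\<theta>]]) (use m' in \<open>simp add: set_substP\<close>)
        have "unifier (subst_comp \<theta> \<sigma>') (set L \<union> set [(t1, t2)])"
          using is_mgu_unifier[OF mc] by (simp add: Un_commute)
        from unif_after[OF m\<sigma> this] obtain \<theta>' where g\<theta>': "good_mgu \<theta>' {(subst_trm \<sigma> t1, subst_trm \<sigma> t2)}"
          by auto
        have mc2: "is_mgu (subst_comp \<sigma> \<theta>') ({(t1, t2)} \<union> set L)"
          using mgu_comp[OF m\<sigma>, of \<theta>' "{(t1, t2)}"] g\<theta>' by (simp add: substS_def good_mgu_def Un_commute)
        have "succ P (subst_goal (subst_comp \<theta> \<sigma>') (G1' @ G2)) (n' - length L) k'"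
          using s3 r_eq by simp
        from succ_mgu_variant[OF mc mc2 this]
        have "succ P ([] @ subst_goal \<theta>' (subst_goal \<sigma> (G1' @ G2))) (n' - length L) k'" by simp
        from succ_step[OF rstep.r_eq[OF g\<theta>'] this] show ?thesis
          using r_eq k by (intro suff) simp
      next
        case (r_neq t1 t2)
        have "A # G1' = [] @ Neq t1 t2 # G1'" using r_neq by simp
        from isoA[unfolded iso_def, rule_format, OF this]
        have dj: "vars_atom (Neq t1 t2) \<inter> pvars (set L) = {}" by auto
        have fixA: "subst_atom \<sigma> (Neq t1 t2) = Neq t1 t2" by (rule relv_fix_atom[OF rv\<sigma> dj])
        have s5: "succ P (subst_goal \<sigma>' (G1' @ G2)) (n' - length L) k'" using s3 r_neq by simp
        have m'': "is_mgu \<sigma>' (set L)" using m' r_neq by simp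
        have "succ P (subst_goal \<sigma> (G1' @ G2)) (n' - length L) k'"
          by (rule succ_mgu_variant[OF m'' m\<sigma> s5])
        then have "succ P ([] @ subst_goal Var (subst_goal \<sigma> (G1' @ G2))) (n' - length L) k'" by simp
        from succ_step[OF rstep.r_neq this] show ?thesis
          using r_neq k fixA by (intro suff) simp
      next
        case (r_res C0 \<rho> p us B ts)
        have g\<theta>: "good_mgu \<theta> (set (zip ts us))" using r_res by simp
        have dis: "vars_clause (Cl p us B) \<inter> (vars_atom (Pred p ts) \<union> vars_goal (G1' @ mkeqs L @ G2)) = {}"
          using r_res by simp
        have usfix: "map (subst_trm \<sigma>) us = us"
        proof (rule map_idI)
          fix u assume "u \<in> set us"
          then have "vars_trm u \<inter> pvars (set L) = {}" using dis by (auto simp: vars_clause_Cl)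
          then show "subst_trm \<sigma> u = u" by (rule relv_fix[OF rv\<sigma>])
        qed
        have Bfix: "subst_goal \<sigma> B = B"
          by (rule relv_fix_goal[OF rv\<sigma>]) (use dis in \<open>auto simp: vars_clause_Cl\<close>)
        have mc: "is_mgu (subst_comp \<theta> \<sigma>') (set (zip ts us) \<union> set L)"
          by (rule mgu_comp[OF good_mgu_is_mgu[OF g\<theta>]]) (use m' in \<open>simp add: set_substP\<close>)
        have "unifier (subst_comp \<theta> \<sigma>') (set L \<union> set (zip ts us))"
          using is_mgu_unifier[OF mc] by (simp add: Un_commute)
        from unif_after[OF m\<sigma> this] obtain \<theta>' where g\<theta>': "good_mgu \<theta>' (set (zip (map (subst_trm \<sigma>) ts) us))"
          using usfix by (auto simp: substP_zip)
        have mc2: "is_mgu (subst_comp \<sigma> \<theta>') (set (zip ts us) \<union> set L)"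
          using mgu_comp[OF m\<sigma>, of \<theta>' "set (zip ts us)"] g\<theta>' usfix
          by (simp add: set_substP[symmetric] substP_zip good_mgu_def Un_commute)
        have "succ P (subst_goal (subst_comp \<theta> \<sigma>') (B @ G1' @ G2)) (n' - length L) k'"
          using s3 r_res by simp
        from succ_mgu_variant[OF mc mc2 this]
        have s4: "succ P (subst_goal \<theta>' B @ subst_goal \<theta>' (subst_goal \<sigma> (G1' @ G2))) (n' - length L) k'"
          using Bfix by simp
        have len2: "length (map (subst_trm \<sigma>) ts) = length us" using r_res by simp
        have dis2: "vars_clause (Cl p us B) \<inter> (vars_atom (Pred p (map (subst_trm \<sigma>) ts)) \<union> vars_goal (subst_goal \<sigma> (G1' @ G2))) = {}"
        proof -
          have "vars_atom (Pred p (map (subst_trm \<sigma>) ts)) \<subseteq> vars_atom (Pred p ts) \<union> pvars (set L)"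
            using relv_vars_atom[OF rv\<sigma>, of "Pred p ts"] by simp
          moreover have "vars_goal (subst_goal \<sigma> (G1' @ G2)) \<subseteq> vars_goal (G1' @ G2) \<union> pvars (set L)"
            by (rule relv_vars_goal[OF rv\<sigma>])
          ultimately show ?thesis using dis by auto
        qed
        have r2: "rstep P (Pred p (map (subst_trm \<sigma>) ts)) (vars_goal (subst_goal \<sigma> (G1' @ G2))) (subst_goal \<theta>' B) \<theta>'"
          by (rule rstep.r_res[OF r_res(3) r_res(4) r_res(5) dis2 len2 g\<theta>'])
        from succ_step[OF r2 s4] show ?thesis
          using r_res k by (intro suff) simp
      qed
    qed
  qed
qed

lemma mainB:
  fixes P :: "('p, 'f, 'v) program"
  assumes safe: "safe_prog M P" and inf: "infinite (UNIV :: 'v set)"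
  shows "succ P (G0 @ mkeqs L @ G1 @ G2) n k \<Longrightarrow> iso G0 G1 L G2 \<Longrightarrow> allcons M P (G0 @ G1) \<Longrightarrow>
    succ P (G0 @ G1 @ mkeqs L @ G2) n k"
proof (induction n arbitrary: G0 G1 L G2 k rule: less_induct)
  case (less n)
  show ?case
  proof (cases G0)
    case (Cons A G0')
    from less.prems(1) obtain n' k' X \<theta> where n: "n = Suc n'" and k: "k = k' + (if nonbasic A then 1 else 0)"
      and r: "rstep P A (vars_goal (G0' @ mkeqs L @ G1 @ G2)) X \<theta>"
      and s: "succ P (X @ subst_goal \<theta> (G0' @ mkeqs L @ G1 @ G2)) n' k'"
      unfolding Cons by (auto simp: succ_Cons)
    have s': "succ P ((X @ subst_goal \<theta> G0') @ mkeqs (substP \<theta> L) @ subst_goal \<theta> G1 @ subst_goal \<theta> G2) n' k'"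
      using s by simp
    have iso': "iso (X @ subst_goal \<theta> G0') (subst_goal \<theta> G1) (substP \<theta> L) (subst_goal \<theta> G2)"
      by (rule iso_G0_step[OF less.prems(2)[unfolded Cons] r]) auto
    have "rstep P A (vars_goal (G0' @ G1)) X \<theta>" using r by (rule rstep_mono) auto
    then have st: "step P (A # G0' @ G1) (X @ subst_goal \<theta> (G0' @ G1))"
      unfolding step_iff by blast
    have ac': "allcons M P ((X @ subst_goal \<theta> G0') @ subst_goal \<theta> G1)"
      using allcons_step[OF less.prems(3)[unfolded Cons append_Cons] st] by simp
    have "succ P ((X @ subst_goal \<theta> G0') @ subst_goal \<theta> G1 @ mkeqs (substP \<theta> L) @ subst_goal \<theta> G2) n' k'"
      by (rule less.IH[OF _ s' iso' ac']) (simp add: n)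
    then have s2: "succ P (X @ subst_goal \<theta> (G0' @ G1 @ mkeqs L @ G2)) n' k'" by simp
    have r2: "rstep P A (vars_goal (G0' @ G1 @ mkeqs L @ G2)) X \<theta>"
      using r by (rule rstep_mono) auto
    from succ_step[OF r2 s2] show ?thesis using Cons n k by simp
  next
    case G0: Nil
    show ?thesis
    proof (cases G1)
      case Nil
      then show ?thesis using less.prems(1) G0 by simp
    next
      case (Cons A G1')
      have "succ P (mkeqs L @ A # G1' @ G2) n k" using less.prems(1) G0 Cons by simp
      from eqs_fwd[OF this] obtain \<sigma> where lenL: "length L \<le> n" and m\<sigma>: "is_mgu \<sigma> (set L)"
        and rv\<sigma>: "relv \<sigma> (pvars (set L))" and s\<sigma>: "succ P (subst_goal \<sigma> (A # G1' @ G2)) (n - length L) k"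
        by auto
      from s\<sigma> obtain m k' X' \<theta>' where m: "n - length L = Suc m" and k: "k = k' + (if nonbasic A then 1 else 0)"
        and r': "rstep P (subst_atom \<sigma> A) (vars_goal (subst_goal \<sigma> (G1' @ G2))) X' \<theta>'"
        and s': "succ P (X' @ subst_goal \<theta>' (subst_goal \<sigma> (G1' @ G2))) m k'"
        by (auto simp: succ_Cons)
      have isoA: "iso [] (A # G1') L G2" using less.prems(2) G0 Cons by simp
      have ac1: "allcons M P (A # G1')" using less.prems(3) G0 Cons by simp
      have fin: "?thesis" if rA: "rstep P A (vars_goal (G1' @ mkeqs L @ G2)) X \<theta>"
        and sA: "succ P (mkeqs (substP \<theta> L) @ X @ subst_goal \<theta> G1' @ subst_goal \<theta> G2) (m + length L) k'" for X \<theta>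
      proof -
        have "rstep P A (vars_goal G1') X \<theta>" using rA by (rule rstep_mono) auto
        then have st: "step P (A # G1') (X @ subst_goal \<theta> G1')" unfolding step_iff by blast
        have sat: "nonbasic A \<Longrightarrow> sat_atom M A" using allcons_sat[OF ac1 st] .
        have iso': "iso [] (X @ subst_goal \<theta> G1') (substP \<theta> L) (subst_goal \<theta> G2)"
          by (rule iso_G1_step[OF isoA rA safe sat])
        have ac': "allcons M P ([] @ X @ subst_goal \<theta> G1')" using allcons_step[OF ac1 st] by simp
        have sA': "succ P ([] @ mkeqs (substP \<theta> L) @ (X @ subst_goal \<theta> G1') @ subst_goal \<theta> G2) (m + length L) k'"
          using sA by simp
        have "succ P ([] @ (X @ subst_goal \<theta> G1') @ mkeqs (substP \<theta> L) @ subst_goal \<theta> G2) (m + length L) k'"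
          by (rule less.IH[OF _ sA' iso' ac']) (use m lenL in simp)
        then have "succ P (X @ subst_goal \<theta> (G1' @ mkeqs L @ G2)) (m + length L) k'" by simp
        from succ_step[OF rA this] have "succ P (A # G1' @ mkeqs L @ G2) (Suc (m + length L)) (k' + (if nonbasic A then 1 else 0))" .
        moreover have "Suc (m + length L) = n" using m lenL by simp
        ultimately show ?thesis using G0 Cons k by simp
      qed
      show ?thesis
      proof (cases A)
        case (Eq t1 t2)
        from r' Eq have X': "X' = []" and g\<theta>': "good_mgu \<theta>' {(subst_trm \<sigma> t1, subst_trm \<sigma> t2)}"
          by (auto elim: rstep.cases)
        have mc2: "is_mgu (subst_comp \<sigma> \<theta>') (set L \<union> {(t1, t2)})"
          using mgu_comp[OF m\<sigma>, of \<theta>' "{(t1, t2)}"] g\<theta>' by (simp add: substS_def good_mgu_def)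
        have "unifier (subst_comp \<sigma> \<theta>') (set [(t1, t2)])" using is_mgu_unifier[OF mc2] by (simp add: unifier_union)
        then obtain \<theta> where g\<theta>: "good_mgu \<theta> {(t1, t2)}" using unif_exists by fastforce
        have "unifier (subst_comp \<sigma> \<theta>') ({(t1, t2)} \<union> set L)" using is_mgu_unifier[OF mc2] by (simp add: Un_commute)
        from unif_after[OF good_mgu_is_mgu[OF g\<theta>] this] obtain \<sigma>'' where g'': "good_mgu \<sigma>'' (set (substP \<theta> L))" by blast
        have mc: "is_mgu (subst_comp \<theta> \<sigma>'') (set L \<union> {(t1, t2)})"
          using mgu_comp[OF good_mgu_is_mgu[OF g\<theta>], of \<sigma>'' "set L"] g'' by (simp add: set_substP good_mgu_def Un_commute)
        have "succ P (subst_goal (subst_comp \<sigma> \<theta>') (G1' @ G2)) m k'" using s' X' by simp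
        from succ_mgu_variant[OF mc2 mc this] have "succ P (subst_goal \<sigma>'' (subst_goal \<theta> (G1' @ G2))) m k'" by simp
        from eqs_bwd[OF good_mgu_is_mgu[OF g''] this]
        have "succ P (mkeqs (substP \<theta> L) @ [] @ subst_goal \<theta> G1' @ subst_goal \<theta> G2) (m + length L) k'" by simp
        moreover have "rstep P A (vars_goal (G1' @ mkeqs L @ G2)) [] \<theta>"
          using rstep.r_eq[OF g\<theta>] Eq by simp
        ultimately show ?thesis using fin by blast
      next
        case (Neq t1 t2)
        have "A # G1' = [] @ Neq t1 t2 # G1'" using Neq by simp
        from isoA[unfolded iso_def, rule_format, OF this]
        have dj: "vars_atom (Neq t1 t2) \<inter> pvars (set L) = {}" by auto
        have fixA: "subst_atom \<sigma> A = Neq t1 t2" using relv_fix_atom[OF rv\<sigma> dj] Neq by simp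
        from r' fixA have X': "X' = []" and th': "\<theta>' = Var" and nu: "\<not> (\<exists>\<sigma>. subst_trm \<sigma> t1 = subst_trm \<sigma> t2)"
          by (auto elim: rstep.cases)
        have "succ P (subst_goal \<sigma> (G1' @ G2)) m k'" using s' X' th' by simp
        from eqs_bwd[OF m\<sigma> this] have "succ P (mkeqs (substP Var L) @ [] @ subst_goal Var G1' @ subst_goal Var G2) (m + length L) k'"
          by simp
        moreover have "rstep P A (vars_goal (G1' @ mkeqs L @ G2)) [] Var"
          using rstep.r_neq[OF nu] Neq by simp
        ultimately show ?thesis using fin by blast
      next
        case (Pred p ts)
        from r' Pred obtain C0 \<rho> us B where C0: "C0 \<in> P" and b: "bij \<rho>" and rc: "rename_clause \<rho> C0 = Cl p us B"
          and dis: "vars_clause (Cl p us B) \<inter> (vars_atom (Pred p (map (subst_trm \<sigma>) ts)) \<union> vars_goal (subst_goal \<sigma> (G1' @ G2))) = {}"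
          and len: "length (map (subst_trm \<sigma>) ts) = length us" and g\<theta>': "good_mgu \<theta>' (set (zip (map (subst_trm \<sigma>) ts) us))"
          and X': "X' = subst_goal \<theta>' B"
          by (auto elim!: rstep.cases)
        have s'': "succ P (subst_goal \<theta>' (B @ subst_goal \<sigma> (G1' @ G2))) m k'" using s' X' by simp
        define W where "W = vars_goal (A # G1' @ mkeqs L @ G2)"
        have fW: "finite W" unfolding W_def by (rule finite_vars_goal)
        from rename_fresh[OF inf C0 b rc dis len g\<theta>' s'' fW] obtain \<rho>2 us2 B2 \<theta>2 where
          b2: "bij \<rho>2" and rc2: "rename_clause \<rho>2 C0 = Cl p us2 B2"
          and dis2: "vars_clause (Cl p us2 B2) \<inter> (vars_atom (Pred p (map (subst_trm \<sigma>) ts)) \<union> vars_goal (subst_goal \<sigma> (G1' @ G2)) \<union> W) = {}"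
          and len2: "length (map (subst_trm \<sigma>) ts) = length us2" and g2: "good_mgu \<theta>2 (set (zip (map (subst_trm \<sigma>) ts) us2))"
          and s2: "succ P (subst_goal \<theta>2 (B2 @ subst_goal \<sigma> (G1' @ G2))) m k'"
          by blast
        have disW: "vars_clause (Cl p us2 B2) \<inter> W = {}" using dis2 by blast
        have usfix: "map (subst_trm \<sigma>) us2 = us2"
        proof (rule map_idI)
          fix u assume "u \<in> set us2"
          then have "vars_trm u \<inter> pvars (set L) = {}" using disW by (auto simp: vars_clause_Cl W_def)
          then show "subst_trm \<sigma> u = u" by (rule relv_fix[OF rv\<sigma>])
        qed
        have Bfix: "subst_goal \<sigma> B2 = B2"
          by (rule relv_fix_goal[OF rv\<sigma>]) (use disW in \<open>auto simp: vars_clause_Cl W_def\<close>)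
        have mc2: "is_mgu (subst_comp \<sigma> \<theta>2) (set L \<union> set (zip ts us2))"
          using mgu_comp[OF m\<sigma>, of \<theta>2 "set (zip ts us2)"] g2 usfix
          by (simp add: set_substP[symmetric] substP_zip good_mgu_def)
        have lts: "length ts = length us2" using len2 by simp
        have "unifier (subst_comp \<sigma> \<theta>2) (set (zip ts us2))" using is_mgu_unifier[OF mc2] by (simp add: unifier_union)
        then obtain \<theta> where g\<theta>: "good_mgu \<theta> (set (zip ts us2))" using unif_exists by blast
        have "unifier (subst_comp \<sigma> \<theta>2) (set (zip ts us2) \<union> set L)" using is_mgu_unifier[OF mc2] by (simp add: Un_commute)
        from unif_after[OF good_mgu_is_mgu[OF g\<theta>] this] obtain \<sigma>'' where g'': "good_mgu \<sigma>'' (set (substP \<theta> L))" by blast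
        have mc: "is_mgu (subst_comp \<theta> \<sigma>'') (set L \<union> set (zip ts us2))"
          using mgu_comp[OF good_mgu_is_mgu[OF g\<theta>], of \<sigma>'' "set L"] g'' by (simp add: set_substP good_mgu_def Un_commute)
        have "succ P (subst_goal (subst_comp \<sigma> \<theta>2) (B2 @ G1' @ G2)) m k'" using s2 Bfix by simp
        from succ_mgu_variant[OF mc2 mc this] have "succ P (subst_goal \<sigma>'' (subst_goal \<theta> (B2 @ G1' @ G2))) m k'" by simp
        from eqs_bwd[OF good_mgu_is_mgu[OF g''] this]
        have sfin: "succ P (mkeqs (substP \<theta> L) @ subst_goal \<theta> B2 @ subst_goal \<theta> G1' @ subst_goal \<theta> G2) (m + length L) k'" by simp
        have disA: "vars_clause (Cl p us2 B2) \<inter> (vars_atom (Pred p ts) \<union> vars_goal (G1' @ mkeqs L @ G2)) = {}"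
          using disW Pred by (auto simp: W_def)
        have rA: "rstep P A (vars_goal (G1' @ mkeqs L @ G2)) (subst_goal \<theta> B2) \<theta>"
          unfolding Pred by (rule rstep.r_res[OF C0 b2 rc2 disA lts g\<theta>])
        show ?thesis by (rule fin[OF rA sfin])
      qed
    qed
  qed
qed

lemma lam_alt: "lam ds = length (filter leftmost_nonbasic ds)"
  by (simp add: lam_def length_filter_conv_card)

lemma succ_deriv: "succ P G n k \<Longrightarrow> \<exists>ds. successful_deriv P G ds \<and> length ds = Suc n \<and> lam ds = k"
proof (induction rule: succ.induct)
  case s_nil
  show ?case
    by (rule exI[of _ "[[]]"]) (simp add: successful_deriv_def derivation_def lam_alt)
next
  case (s_step G G' n k)
  then obtain ds where ds: "successful_deriv P G' ds" "length ds = Suc n" "lam ds = k" by blast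
  have ne: "ds \<noteq> []" using ds by (simp add: successful_deriv_def derivation_def)
  have "derivation P (G # ds)"
    unfolding derivation_def
  proof (intro conjI allI impI)
    fix i assume i: "Suc i < length (G # ds)"
    show "step P ((G # ds) ! i) ((G # ds) ! Suc i)"
    proof (cases i)
      case 0
      then show ?thesis using s_step.hyps(1) ds(1) ne by (simp add: successful_deriv_def hd_conv_nth)
    next
      case (Suc j)
      then show ?thesis using ds(1) i by (simp add: successful_deriv_def derivation_def)
    qed
  qed simp
  then have "successful_deriv P G (G # ds)" using ds(1) ne by (simp add: successful_deriv_def)
  moreover have "lam (G # ds) = k + (if leftmost_nonbasic G then 1 else 0)" using ds(3) by (simp add: lam_alt)
  ultimately show ?case using ds(2) by (intro exI[of _ "G # ds"]) simp
qed

lemma deriv_succ: "successful_deriv P G ds \<Longrightarrow> succ P G (length ds - 1) (lam ds)"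
proof (induction ds arbitrary: G)
  case Nil
  then show ?case by (simp add: successful_deriv_def derivation_def)
next
  case (Cons G0 ds)
  show ?case
  proof (cases ds)
    case Nil
    then show ?thesis using Cons.prems by (auto simp: successful_deriv_def lam_alt intro: succ.s_nil)
  next
    case (Cons G' rest)
    have d: "derivation P (G0 # G' # rest)" "G0 = G" "last (G' # rest) = []"
      using Cons.prems \<open>ds = G' # rest\<close> by (auto simp: successful_deriv_def)
    have st: "step P G G'" using d(1) d(2) unfolding derivation_def by (metis length_Cons nth_Cons_0 nth_Cons_Suc zero_less_Suc Suc_mono)
    have "derivation P (G' # rest)"
      using d(1) unfolding derivation_def by (auto simp del: nth_Cons_Suc)
    then have "successful_deriv P G' ds" using d(3) \<open>ds = G' # rest\<close> by (simp add: successful_deriv_def)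
    then have "succ P G' (length ds - 1) (lam ds)" by (rule Cons.IH)
    from succ.s_step[OF st this] have "succ P G (Suc (length ds - 1)) (lam ds + (if leftmost_nonbasic G then 1 else 0))" .
    moreover have "lam (G0 # ds) = lam ds + (if leftmost_nonbasic G then 1 else 0)"
      using d(2) by (simp add: lam_alt)
    moreover have "length (G0 # ds) - 1 = Suc (length ds - 1)" using \<open>ds = G' # rest\<close> by simp
    ultimately show ?thesis by simp
  qed
qed

lemma steps_succ: "steps P G [] \<longleftrightarrow> (\<exists>n k. succ P G n k)"
proof
  assume "steps P G []"
  then show "\<exists>n k. succ P G n k"
  proof (induction rule: converse_rtranclp_induct)
    case base then show ?case using succ.s_nil by blast
  next
    case (step G G') then show ?case using succ.s_step by blast
  qed
next
  assume "\<exists>n k. succ P G n k"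
  then obtain n k where "succ P G n k" by blast
  then show "steps P G []"
    by (induction rule: succ.induct) (auto intro: converse_rtranclp_into_rtranclp)
qed

lemma mu_alt: "mu P G = Inf (enat ` {k. \<exists>n. succ P G n k})"
proof -
  have "(\<lambda>ds. enat (lam ds)) ` {ds. successful_deriv P G ds} = enat ` {k. \<exists>n. succ P G n k}"
  proof
    show "(\<lambda>ds. enat (lam ds)) ` {ds. successful_deriv P G ds} \<subseteq> enat ` {k. \<exists>n. succ P G n k}"
      using deriv_succ by blast
    show "enat ` {k. \<exists>n. succ P G n k} \<subseteq> (\<lambda>ds. enat (lam ds)) ` {ds. successful_deriv P G ds}"
      using succ_deriv by (fastforce simp: image_iff)
  qed
  then show ?thesis by (simp add: mu_def)
qed

lemma nu_alt: "nu P G = Inf (enat ` {n. \<exists>k. succ P G n k})"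
proof -
  have "(\<lambda>ds. enat (length ds - 1)) ` {ds. successful_deriv P G ds} = enat ` {n. \<exists>k. succ P G n k}"
  proof
    show "(\<lambda>ds. enat (length ds - 1)) ` {ds. successful_deriv P G ds} \<subseteq> enat ` {n. \<exists>k. succ P G n k}"
      using deriv_succ by blast
    show "enat ` {n. \<exists>k. succ P G n k} \<subseteq> (\<lambda>ds. enat (length ds - 1)) ` {ds. successful_deriv P G ds}"
    proof
      fix x assume "x \<in> enat ` {n. \<exists>k. succ P G n k}"
      then obtain n k where x: "x = enat n" and s: "succ P G n k" by blast
      from succ_deriv[OF s] obtain ds where "successful_deriv P G ds" "length ds = Suc n" by blast
      then show "x \<in> (\<lambda>ds. enat (length ds - 1)) ` {ds. successful_deriv P G ds}" using x by force
    qed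
  qed
  then show ?thesis by (simp add: nu_def)
qed

lemma ex_mkeqs: "\<forall>a\<in>set Eqs. is_eq a \<Longrightarrow> \<exists>L. Eqs = mkeqs L"
proof (induction Eqs)
  case Nil then show ?case by (intro exI[of _ "[]"]) simp
next
  case (Cons a Eqs)
  then obtain L where L: "Eqs = mkeqs L" by auto
  from Cons.prems obtain s t where "a = Eq s t" by (cases a) auto
  then show ?case using L by (intro exI[of _ "(s, t) # L"]) simp
qed

theorem lemma7:
  fixes P :: "('p, 'f, 'v) program" and M :: "'p mode"
    and Eqs G0 G1 G2 :: "('p, 'f, 'v) goal"
  assumes "infinite (UNIV :: 'v set)"
    and "mode_for M P"
    and "safe_prog M P"
    and "prog_satisfies P M"
    and "\<forall>a\<in>set Eqs. is_eq a"
    and "\<forall>a\<in>set G1. \<not> is_neq a"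
    and "\<forall>ds. derivation P ds \<and> hd ds = G0 @ G1 \<longrightarrow> consistent M ds"
  shows "(steps P (G0 @ G1 @ Eqs @ G2) [] \<longleftrightarrow> steps P (G0 @ Eqs @ G1 @ G2) [])
    \<and> mu P (G0 @ G1 @ Eqs @ G2) = mu P (G0 @ Eqs @ G1 @ G2)
    \<and> nu P (G0 @ G1 @ Eqs @ G2) = nu P (G0 @ Eqs @ G1 @ G2)"
proof -
  obtain L where L: "Eqs = mkeqs L" using ex_mkeqs[OF assms(5)] by blast
  have iso: "iso G0 G1 L G2" by (rule iso_noneq[OF assms(6)])
  have ac: "allcons M P (G0 @ G1)" using assms(7) by (simp add: allcons_def)
  have eq: "succ P (G0 @ G1 @ Eqs @ G2) n k \<longleftrightarrow> succ P (G0 @ Eqs @ G1 @ G2) n k" for n k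
    using mainF[OF assms(3) _ iso ac] mainB[OF assms(3) assms(1) _ iso ac] L by blast
  show ?thesis
    unfolding steps_succ mu_alt nu_alt eq by simp
qed

end
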